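(* Let $H$ be a real Hilbert space, $C\subset H$ nonempty closed convex with metric projection $P$, and $A,F:H\to H$ satisfying: (A1) $A$ is $\lambda$-strongly monotone and $L_A$-Lipschitz continuous, $F$ is $L_F$-Lipschitz continuous, and $A,F$ are sequentially weak-to-weak continuous; (A2) the couple $(A,F)$ is monotone; (A3) $\mathrm{Sol}(A,F,C)\ne\emptyset$ and $\mathcal C:=A(\mathrm{Sol}(A,F,C))$ is convex. Assume moreover that $A$ is linear and self-adjoint. Let $\alpha:[0,\infty)\to(0,\infty)$ be continuously differentiable and $\mu:[0,\infty)\to(0,\infty)$ continuous with $$\lim_{t\to\infty}\alpha(t)=0,\quad \lim_{t\to\infty}\alpha(t)\mu(t)=\infty,\quad \lim_{t\to\infty}\frac{\dot\alpha(t)}{\alpha^2(t)}=0,\quad \int_0^\infty\alpha(t)\,dt=\infty.$$ Let $x(t)$ be a strong global solution of $\dot x(t)=P\big(F_{\alpha(t)}x(t)-\mu(t)Ax(t)\big)-F_{\alpha(t)}x(t)$, $x(0)=x_0\in H$, where $F_\alpha:=F+\alpha I$. Then $\|x(t)-x^\dagger\|\to0$ as $t\to\infty$, where $x^\dagger:=A^{-1}u^\dagger$ and $u^\dagger$ is the unique solution of the problem: find $u\in\mathcal C$ with $\langle A^{-1}u,v-u\rangle\ge0$ for all $v\in\mathcal C$.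
   Context: $\mathrm{Sol}(A,F,C)$ is the solution set of $\mathrm{GVI}(A,F,C)$: find $x^*\in H$ with $Fx^*\in C$ and $\langle Ax^*,y-Fx^*\rangle\ge0$ for all $y\in C$. The couple $(A,F)$ is monotone if $\langle Ax-Ay,Fx-Fy\rangle\ge0$ for all $x,y$. Sequentially weak-to-weak continuous: $x^k\rightharpoonup\bar x$ implies $Ax^k\rightharpoonup A\bar x$. A strong global solution is a function $x:[0,\infty)\to H$ absolutely continuous on every $[0,T]$, satisfying the equation for almost every $t\ge0$ and the initial condition. ($u^\dagger$ exists uniquely since $A^{-1}$ is Lipschitz and strongly monotone and $\mathcal C$ is closed convex; $x^\dagger\in\mathrm{Sol}(A,F,C)$.) *)

theory Defs
  imports "HOL-Analysis.Analysis"
begin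

definition weak_conv :: "(nat \<Rightarrow> 'a::real_inner) \<Rightarrow> 'a \<Rightarrow> bool" where
  "weak_conv xs x \<longleftrightarrow> (\<forall>y. ((\<lambda>k. xs k \<bullet> y) \<longlongrightarrow> x \<bullet> y) sequentially)"

definition seq_weak_weak_cont :: "('a::real_inner \<Rightarrow> 'a) \<Rightarrow> bool" where
  "seq_weak_weak_cont A \<longleftrightarrow> (\<forall>xs x. weak_conv xs x \<longrightarrow> weak_conv (\<lambda>k. A (xs k)) (A x))"

text \<open>Metric projection onto a set (the nearest point; unique for nonempty closed convex sets in Hilbert space).\<close>
definition metric_proj :: "'a::real_inner set \<Rightarrow> 'a \<Rightarrow> 'a" where
  "metric_proj C x = (THE p. p \<in> C \<and> (\<forall>y\<in>C. norm (x - p) \<le> norm (x - y)))"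

definition strongly_monotone :: "real \<Rightarrow> ('a::real_inner \<Rightarrow> 'a) \<Rightarrow> bool" where
  "strongly_monotone lam A \<longleftrightarrow> (\<forall>x y. (A x - A y) \<bullet> (x - y) \<ge> lam * (norm (x - y))\<^sup>2)"

definition monotone_couple :: "('a::real_inner \<Rightarrow> 'a) \<Rightarrow> ('a \<Rightarrow> 'a) \<Rightarrow> bool" where
  "monotone_couple A F \<longleftrightarrow> (\<forall>x y. (A x - A y) \<bullet> (F x - F y) \<ge> 0)"

definition Sol :: "('a::real_inner \<Rightarrow> 'a) \<Rightarrow> ('a \<Rightarrow> 'a) \<Rightarrow> 'a set \<Rightarrow> 'a set" where
  "Sol A F C = {x. F x \<in> C \<and> (\<forall>y\<in>C. A x \<bullet> (y - F x) \<ge> 0)}"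

definition abs_cont_on :: "real \<Rightarrow> real \<Rightarrow> (real \<Rightarrow> 'a::real_normed_vector) \<Rightarrow> bool" where
  "abs_cont_on a b f \<longleftrightarrow>
     (\<forall>\<epsilon>>0. \<exists>\<delta>>0. \<forall>(n::nat) (u::nat \<Rightarrow> real) v.
        (\<forall>i<n. a \<le> u i \<and> u i \<le> v i \<and> v i \<le> b) \<and>
        (\<forall>i<n. \<forall>j<n. i \<noteq> j \<longrightarrow> v i \<le> u j \<or> v j \<le> u i) \<and>
        (\<Sum>i<n. v i - u i) < \<delta>
        \<longrightarrow> (\<Sum>i<n. norm (f (v i) - f (u i))) < \<epsilon>)"

definition strong_global_solution ::
    "(real \<Rightarrow> 'a::real_normed_vector \<Rightarrow> 'a) \<Rightarrow> 'a \<Rightarrow> (real \<Rightarrow> 'a) \<Rightarrow> bool" where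
  "strong_global_solution G x0 x \<longleftrightarrow>
     (\<forall>T\<ge>0. abs_cont_on 0 T x) \<and>
     (AE t in lborel. t \<ge> 0 \<longrightarrow> (x has_vector_derivative G t (x t)) (at t)) \<and>
     x 0 = x0"

end

theory Submission
  imports Defs
begin


lemma parallelogram_mid:
  fixes x a b :: "'a::real_inner"
  shows "(norm (a - b))\<^sup>2 = 2*(norm (x - a))\<^sup>2 + 2*(norm (x - b))\<^sup>2 - 4*(norm (x - (1/2) *\<^sub>R (a + b)))\<^sup>2"
  unfolding power2_norm_eq_inner
  by (simp add: algebra_simps inner_commute)

lemma proj_exists:
  fixes C :: "'a::{real_inner,complete_space} set"
  assumes "C \<noteq> {}" "closed C" "convex C"
  shows "\<exists>p\<in>C. \<forall>y\<in>C. norm (x - p) \<le> norm (x - y)"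
proof -
  define d where "d = Inf ((\<lambda>y. norm (x - y)) ` C)"
  have bdd: "bdd_below ((\<lambda>y. norm (x - y)) ` C)" by (rule bdd_belowI[of _ 0]) auto
  have dle: "d \<le> norm (x - y)" if "y \<in> C" for y
    unfolding d_def using bdd that by (simp add: cInf_lower)
  have d0: "d \<ge> 0" unfolding d_def using assms(1) by (intro cINF_greatest) auto
  have "\<exists>y\<in>C. norm (x - y) < sqrt (d\<^sup>2 + 1/(Suc n))" for n
  proof -
    have "d < sqrt (d\<^sup>2 + 1/(Suc n))" using d0
      by (intro real_less_rsqrt) simp
    then show ?thesis unfolding d_def using assms(1)
      by (subst (asm) cInf_less_iff) (auto simp: bdd)
  qed
  then obtain s where s: "\<And>n. s n \<in> C" "\<And>n. norm (x - s n) < sqrt (d\<^sup>2 + 1/(Suc n))" by metis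
  have sq: "(norm (x - s n))\<^sup>2 \<le> d\<^sup>2 + 1/(Suc n)" for n
  proof -
    have "(norm (x - s n))\<^sup>2 \<le> (sqrt (d\<^sup>2 + 1/(Suc n)))\<^sup>2" using s(2)[of n] by (intro power_mono) auto
    then show ?thesis by simp
  qed
  have mid: "(norm (s n - s m))\<^sup>2 \<le> 2/(Suc n) + 2/(Suc m)" for n m
  proof -
    have "(1/2) *\<^sub>R (s n + s m) \<in> C"
      using convexD[OF assms(3) s(1)[of n] s(1)[of m], of "1/2" "1/2"]
      by (simp add: scaleR_add_right)
    then have "d\<^sup>2 \<le> (norm (x - (1/2) *\<^sub>R (s n + s m)))\<^sup>2"
      using dle d0 by (intro power_mono) auto
    then show ?thesis using parallelogram_mid[of "s n" "s m" x] sq[of n] sq[of m] by linarith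
  qed
  have "Cauchy s"
  proof (rule CauchyI)
    fix e :: real assume e: "e > 0"
    obtain N where N0: "4 / e\<^sup>2 < real N"
      using reals_Archimedean2 by blast
    have N: "4 / e\<^sup>2 < real (Suc N)" using N0 by simp
    have N2: "4 / real (Suc N) < e\<^sup>2" using N e
      by (simp add: field_simps)
    show "\<exists>M. \<forall>m\<ge>M. \<forall>n\<ge>M. norm (s m - s n) < e"
    proof (intro exI allI impI)
      fix m n assume mn: "N \<le> m" "N \<le> n"
      have "2 / real (Suc m) \<le> 2 / real (Suc N)" "2 / real (Suc n) \<le> 2 / real (Suc N)"
        using mn by (auto intro!: divide_left_mono)
      then have h: "(norm (s m - s n))\<^sup>2 < e\<^sup>2" using mid[of m n] N2 by linarith
      have "0 \<le> e" using e by simp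
      from power2_less_imp_less[OF h this] show "norm (s m - s n) < e" .
    qed
  qed
  then obtain p where p: "s \<longlonglongrightarrow> p" using Cauchy_convergent_iff convergent_def by blast
  have pC: "p \<in> C" using closed_sequentially[OF assms(2)] s(1) p by blast
  have "(\<lambda>n. norm (x - s n)) \<longlonglongrightarrow> norm (x - p)" by (intro tendsto_intros p)
  moreover have "(\<lambda>n. sqrt (d\<^sup>2 + 1/(Suc n))) \<longlonglongrightarrow> sqrt (d\<^sup>2 + 0)"
    by (intro tendsto_intros LIMSEQ_inverse_real_of_nat[unfolded inverse_eq_divide])
  ultimately have "norm (x - p) \<le> sqrt (d\<^sup>2 + 0)"
    using s(2) by (intro LIMSEQ_le) (auto intro: less_imp_le)
  then have "norm (x - p) \<le> d" using d0 by simp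
  then show ?thesis using pC dle by force
qed

lemma min_imp_vi:
  fixes C :: "'a::real_inner set"
  assumes "convex C" "p \<in> C" "\<forall>y\<in>C. norm (x - p) \<le> norm (x - y)" "y \<in> C"
  shows "(x - p) \<bullet> (y - p) \<le> 0"
proof (rule ccontr)
  define k where "k = (x - p) \<bullet> (y - p)"
  assume "\<not> ?thesis"
  then have k: "k > 0" by (simp add: k_def)
  then have "y \<noteq> p" by (auto simp: k_def)
  define n where "n = (norm (y - p))\<^sup>2"
  have n: "n > 0" using \<open>y \<noteq> p\<close> by (simp add: n_def)
  define s where "s = min 1 (k / n)"
  have s1: "0 < s" using k n by (simp add: s_def)
  have s2: "s \<le> 1" by (simp add: s_def)
  have "s \<le> k / n" by (simp add: s_def)
  then have s3: "s * n \<le> k" using n by (simp add: pos_le_divide_eq)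
  note s = s1 s2 s3
  have eq: "s *\<^sub>R y + (1 - s) *\<^sub>R p = p + s *\<^sub>R (y - p)" by (simp add: algebra_simps)
  have "s *\<^sub>R y + (1 - s) *\<^sub>R p \<in> C"
    using s1 s2 by (intro convexD[OF assms(1) assms(4) assms(2)]) auto
  then have qC: "p + s *\<^sub>R (y - p) \<in> C" by (simp only: eq)
  have "norm (x - p) \<le> norm (x - (p + s *\<^sub>R (y - p)))" using assms(3) qC by blast
  then have le: "(norm (x - p))\<^sup>2 \<le> (norm (x - (p + s *\<^sub>R (y - p))))\<^sup>2"
    by (rule power_mono) simp
  have "(norm (x - (p + s *\<^sub>R (y - p))))\<^sup>2 = (norm (x - p))\<^sup>2 - 2 * s * k + s * (s * n)"
    unfolding power2_norm_eq_inner k_def n_def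
    by (simp add: algebra_simps inner_commute power2_eq_square)
  moreover have "s * (s * n) \<le> s * k" using s by (intro mult_left_mono) auto
  moreover have "s * k > 0" using s k by simp
  ultimately show False using le by linarith
qed

lemma vi_imp_min:
  fixes C :: "'a::real_inner set"
  assumes "\<forall>y\<in>C. (x - p) \<bullet> (y - p) \<le> 0" "y \<in> C"
  shows "norm (x - p) \<le> norm (x - y)"
proof -
  have e: "x - y = (x - p) + (p - y)" by simp
  have "(norm (x - y))\<^sup>2 = (norm (x - p))\<^sup>2 + (norm (p - y))\<^sup>2 + 2 * ((x - p) \<bullet> (p - y))"
    unfolding power2_norm_eq_inner e inner_add_left inner_add_right by (simp add: inner_commute)
  moreover have "(x - p) \<bullet> (p - y) = - ((x - p) \<bullet> (y - p))" by (simp add: inner_diff_right)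
  moreover have "(x - p) \<bullet> (y - p) \<le> 0" using assms by blast
  ultimately have "(norm (x - p))\<^sup>2 \<le> (norm (x - y))\<^sup>2" using zero_le_power2[of "norm (p - y)"] by linarith
  then show ?thesis by (rule power2_le_imp_le) simp
qed

lemma vi_unique:
  fixes C :: "'a::real_inner set"
  assumes "p \<in> C" "q \<in> C" "\<forall>y\<in>C. (x - p) \<bullet> (y - p) \<le> 0" "\<forall>y\<in>C. (x - q) \<bullet> (y - q) \<le> 0"
  shows "p = q"
proof -
  have "(x - p) \<bullet> (q - p) \<le> 0" "(x - q) \<bullet> (p - q) \<le> 0" using assms by auto
  then have "(p - q) \<bullet> (p - q) \<le> 0" by (simp add: algebra_simps inner_commute)
  then show ?thesis by (metis eq_iff_diff_eq_0 inner_gt_zero_iff not_le)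
qed

locale hproj =
  fixes C :: "'a::{real_inner,complete_space} set"
  assumes ne: "C \<noteq> {}" and cl: "closed C" and cv: "convex C"
begin

lemma proj_props: "metric_proj C x \<in> C \<and> (\<forall>y\<in>C. (x - metric_proj C x) \<bullet> (y - metric_proj C x) \<le> 0)"
proof -
  obtain p where p: "p \<in> C" "\<forall>y\<in>C. norm (x - p) \<le> norm (x - y)"
    using proj_exists[OF ne cl cv] by blast
  have vi: "\<forall>y\<in>C. (x - p) \<bullet> (y - p) \<le> 0" using min_imp_vi[OF cv p] by blast
  have "metric_proj C x = p" unfolding metric_proj_def
  proof (rule the_equality)
    show "p \<in> C \<and> (\<forall>y\<in>C. norm (x - p) \<le> norm (x - y))" using p by blast
  next
    fix q assume q: "q \<in> C \<and> (\<forall>y\<in>C. norm (x - q) \<le> norm (x - y))"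
    then have "\<forall>y\<in>C. (x - q) \<bullet> (y - q) \<le> 0" using min_imp_vi[OF cv] by blast
    then show "q = p" using vi_unique[of q C p x] q p vi by blast
  qed
  then show ?thesis using p vi by simp
qed

lemma proj_in: "metric_proj C x \<in> C" using proj_props by blast
lemma proj_vi: "y \<in> C \<Longrightarrow> (x - metric_proj C x) \<bullet> (y - metric_proj C x) \<le> 0" using proj_props by blast

lemma proj_eqI: assumes "p \<in> C" "\<forall>y\<in>C. (x - p) \<bullet> (y - p) \<le> 0" shows "metric_proj C x = p"
  using vi_unique[OF proj_in assms(1) _ assms(2)] proj_props by blast

lemma proj_nonexp: "norm (metric_proj C x - metric_proj C y) \<le> norm (x - y)"
proof -
  let ?p = "metric_proj C x" and ?q = "metric_proj C y"
  have "(x - ?p) \<bullet> (?q - ?p) \<le> 0" "(y - ?q) \<bullet> (?p - ?q) \<le> 0" using proj_vi proj_in by auto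
  then have "(norm (?p - ?q))\<^sup>2 \<le> (x - y) \<bullet> (?p - ?q)"
    unfolding power2_norm_eq_inner by (simp add: algebra_simps inner_commute)
  also have "\<dots> \<le> norm (x - y) * norm (?p - ?q)" by (rule norm_cauchy_schwarz)
  finally have "norm (?p - ?q) * norm (?p - ?q) \<le> norm (x - y) * norm (?p - ?q)" by (simp add: power2_eq_square)
  then show ?thesis
    by (cases "norm (?p - ?q) = 0") (auto simp: mult_le_cancel_right)
qed

end


lemma contr_est:
  fixes g :: "'a::real_inner \<Rightarrow> 'a"
  assumes m: "m > 0" and sm: "\<forall>x y. (g x - g y) \<bullet> (x - y) \<ge> m * (norm (x - y))\<^sup>2"
    and lip: "\<forall>x y. norm (g x - g y) \<le> Lg * norm (x - y)"
  defines "L' \<equiv> max Lg m"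
  defines "\<rho> \<equiv> m / L'\<^sup>2"
  shows "(norm ((x - \<rho> *\<^sub>R g x) - (y - \<rho> *\<^sub>R g y)))\<^sup>2 \<le> (1 - m\<^sup>2 / L'\<^sup>2) * (norm (x - y))\<^sup>2"
    and "\<rho> > 0" "0 \<le> 1 - m\<^sup>2 / L'\<^sup>2" "1 - m\<^sup>2 / L'\<^sup>2 < 1"
proof -
  have L'm: "L' \<ge> m" "L' > 0" using m by (auto simp: L'_def)
  have rho: "\<rho> > 0" using m L'm by (simp add: \<rho>_def)
  then show "\<rho> > 0" .
  have "m\<^sup>2 \<le> L'\<^sup>2" using L'm m by (intro power_mono) auto
  then show "0 \<le> 1 - m\<^sup>2 / L'\<^sup>2" using L'm by (simp add: field_simps)
  show "1 - m\<^sup>2 / L'\<^sup>2 < 1" using m L'm by simp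
  define d where "d = x - y"
  define h where "h = g x - g y"
  have e: "(x - \<rho> *\<^sub>R g x) - (y - \<rho> *\<^sub>R g y) = d - \<rho> *\<^sub>R h" by (simp add: d_def h_def algebra_simps)
  have n2: "(norm (d - \<rho> *\<^sub>R h))\<^sup>2 = (norm d)\<^sup>2 - 2 * \<rho> * (h \<bullet> d) + \<rho>\<^sup>2 * (norm h)\<^sup>2"
    unfolding power2_norm_eq_inner by (simp add: inner_diff_left inner_diff_right inner_commute power2_eq_square algebra_simps)
  have hd: "h \<bullet> d \<ge> m * (norm d)\<^sup>2" using sm by (simp add: h_def d_def)
  have hn: "norm h \<le> L' * norm d"
  proof -
    have "norm h \<le> Lg * norm d" using lip by (simp add: h_def d_def)
    also have "\<dots> \<le> L' * norm d" by (intro mult_right_mono) (auto simp: L'_def)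
    finally show ?thesis .
  qed
  then have hn2: "(norm h)\<^sup>2 \<le> L'\<^sup>2 * (norm d)\<^sup>2"
    by (metis norm_ge_zero power_mono power_mult_distrib)
  have "(norm (d - \<rho> *\<^sub>R h))\<^sup>2 \<le> (norm d)\<^sup>2 - 2 * \<rho> * (m * (norm d)\<^sup>2) + \<rho>\<^sup>2 * (L'\<^sup>2 * (norm d)\<^sup>2)"
    unfolding n2 using hd hn2 rho
    by (intro add_mono diff_mono mult_left_mono) auto
  also have "\<dots> = (1 - m\<^sup>2 / L'\<^sup>2) * (norm d)\<^sup>2"
    using L'm by (simp add: \<rho>_def field_simps power2_eq_square)
  finally show "(norm ((x - \<rho> *\<^sub>R g x) - (y - \<rho> *\<^sub>R g y)))\<^sup>2 \<le> (1 - m\<^sup>2 / L'\<^sup>2) * (norm (x - y))\<^sup>2"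
    unfolding e d_def .
qed

lemma contraction_fix:
  fixes T :: "'a::{real_normed_vector,complete_space} \<Rightarrow> 'a"
  assumes "0 \<le> q" "q < 1" "\<forall>x y. (norm (T x - T y))\<^sup>2 \<le> q * (norm (x - y))\<^sup>2"
  shows "\<exists>x. T x = x"
proof -
  have "\<forall>x y. dist (T x) (T y) \<le> sqrt q * dist x y"
  proof (intro allI)
    fix x y
    have "sqrt ((norm (T x - T y))\<^sup>2) \<le> sqrt (q * (norm (x - y))\<^sup>2)"
      using assms(3) by (intro real_sqrt_le_mono) auto
    then show "dist (T x) (T y) \<le> sqrt q * dist x y"
      by (simp add: dist_norm real_sqrt_mult)
  qed
  moreover have "sqrt q < 1" using assms by simp
  ultimately show ?thesis using banach_fix_type[of "sqrt q" T] assms by auto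
qed

lemma sm_surj:
  fixes g :: "'a::{real_inner,complete_space} \<Rightarrow> 'a"
  assumes m: "m > 0" and sm: "\<forall>x y. (g x - g y) \<bullet> (x - y) \<ge> m * (norm (x - y))\<^sup>2"
    and lip: "\<forall>x y. norm (g x - g y) \<le> Lg * norm (x - y)"
  shows "\<exists>u. g u = f"
proof -
  define L' where "L' = max Lg m"
  define \<rho> where "\<rho> = m / L'\<^sup>2"
  define g' where "g' = (\<lambda>x. g x - f)"
  have sm': "\<forall>x y. (g' x - g' y) \<bullet> (x - y) \<ge> m * (norm (x - y))\<^sup>2" using sm by (simp add: g'_def)
  have lip': "\<forall>x y. norm (g' x - g' y) \<le> Lg * norm (x - y)" using lip by (simp add: g'_def)
  note ce = contr_est[OF m sm' lip', folded L'_def, folded \<rho>_def]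
  have "\<exists>u. (\<lambda>x. x - \<rho> *\<^sub>R g' x) u = u"
    by (rule contraction_fix[OF ce(3) ce(4)]) (use ce(1) in auto)
  then obtain u where "u - \<rho> *\<^sub>R g' u = u" by auto
  then have "g' u = 0" using ce(2) by simp
  then show ?thesis by (auto simp: g'_def)
qed

lemma sm_vi_exists:
  fixes K :: "'a::{real_inner,complete_space} \<Rightarrow> 'a"
  assumes "hproj C"
    and m: "m > 0" and sm: "\<forall>x y. (K x - K y) \<bullet> (x - y) \<ge> m * (norm (x - y))\<^sup>2"
    and lip: "\<forall>x y. norm (K x - K y) \<le> Lg * norm (x - y)"
  shows "\<exists>w\<in>C. \<forall>y\<in>C. K w \<bullet> (y - w) \<ge> 0"
proof -
  interpret hproj C by fact
  define L' where "L' = max Lg m"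
  define \<rho> where "\<rho> = m / L'\<^sup>2"
  note ce = contr_est[OF m sm lip, folded L'_def, folded \<rho>_def]
  have "\<exists>w. (\<lambda>x. metric_proj C (x - \<rho> *\<^sub>R K x)) w = w"
  proof (rule contraction_fix[OF ce(3) ce(4)], intro allI)
    fix x y
    have "norm (metric_proj C (x - \<rho> *\<^sub>R K x) - metric_proj C (y - \<rho> *\<^sub>R K y))
          \<le> norm ((x - \<rho> *\<^sub>R K x) - (y - \<rho> *\<^sub>R K y))" by (rule proj_nonexp)
    then have "(norm (metric_proj C (x - \<rho> *\<^sub>R K x) - metric_proj C (y - \<rho> *\<^sub>R K y)))\<^sup>2
          \<le> (norm ((x - \<rho> *\<^sub>R K x) - (y - \<rho> *\<^sub>R K y)))\<^sup>2" by (rule power_mono) simp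
    also have "\<dots> \<le> (1 - m\<^sup>2 / L'\<^sup>2) * (norm (x - y))\<^sup>2" by (rule ce(1))
    finally show "(norm (metric_proj C (x - \<rho> *\<^sub>R K x) - metric_proj C (y - \<rho> *\<^sub>R K y)))\<^sup>2
          \<le> (1 - m\<^sup>2 / L'\<^sup>2) * (norm (x - y))\<^sup>2" .
  qed
  then obtain w where w: "metric_proj C (w - \<rho> *\<^sub>R K w) = w" by auto
  have wC: "w \<in> C" using proj_in[of "w - \<rho> *\<^sub>R K w"] w by simp
  have "K w \<bullet> (y - w) \<ge> 0" if y: "y \<in> C" for y
  proof -
    have "((w - \<rho> *\<^sub>R K w) - w) \<bullet> (y - w) \<le> 0" using proj_vi[OF y, of "w - \<rho> *\<^sub>R K w"] w by simp
    then have "\<rho> * (K w \<bullet> (y - w)) \<ge> 0" by simp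
    then show ?thesis using ce(2) by (simp add: zero_le_mult_iff)
  qed
  then show ?thesis using wC by blast
qed


locale setting = hproj C for C :: "'a::{real_inner,complete_space} set" +
  fixes A F :: "'a \<Rightarrow> 'a" and lam LA LF :: real and xd :: 'a
  assumes lam: "lam > 0" and smA: "strongly_monotone lam A" and lipA: "LA-lipschitz_on UNIV A"
    and lipF: "LF-lipschitz_on UNIV F" and mc: "monotone_couple A F"
    and linA: "linear A" and saA: "\<forall>u v. A u \<bullet> v = u \<bullet> A v"
    and xdS: "xd \<in> Sol A F C" and xd_min: "\<forall>s\<in>Sol A F C. xd \<bullet> (A s - A xd) \<ge> 0"
begin

definition L where "L = max LA lam"
definition solr where "solr a z \<longleftrightarrow> F z + a *\<^sub>R z \<in> C \<and> (\<forall>y\<in>C. A z \<bullet> (y - (F z + a *\<^sub>R z)) \<ge> 0)"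

lemma L_pos: "L > 0" and L_lam: "lam \<le> L" using lam by (auto simp: L_def)
lemma LF_nn: "LF \<ge> 0" using lipF lipschitz_on_nonneg by blast

lemma A_diff: "A u - A v = A (u - v)" using linA by (simp add: linear_diff)
lemma A_add: "A u + A v = A (u + v)" using linA by (simp add: linear_add)
lemma A_scale: "A (c *\<^sub>R u) = c *\<^sub>R A u" using linA by (simp add: linear_scale)
lemma A_0: "A 0 = 0" using linA by (simp add: linear_0)
lemma A_sa: "A u \<bullet> v = u \<bullet> A v" using saA by blast

lemma A_bnd: "norm (A v) \<le> L * norm v"
proof -
  have "dist (A v) (A 0) \<le> LA * dist v 0" using lipschitz_onD[OF lipA] by blast
  then have "norm (A v) \<le> LA * norm v" by (simp add: A_0)
  also have "\<dots> \<le> L * norm v" by (intro mult_right_mono) (auto simp: L_def)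
  finally show ?thesis .
qed

lemma A_pos: "lam * (norm v)\<^sup>2 \<le> A v \<bullet> v"
  using smA unfolding strongly_monotone_def by (metis A_0 diff_zero)

lemma A_pos': "lam * (norm v)\<^sup>2 \<le> v \<bullet> A v"
  using A_pos A_sa by simp

lemma A_quad_le: "A v \<bullet> v \<le> L * (norm v)\<^sup>2"
proof -
  have "A v \<bullet> v \<le> norm (A v) * norm v" by (rule norm_cauchy_schwarz)
  also have "\<dots> \<le> L * norm v * norm v" by (intro mult_right_mono A_bnd) auto
  finally show ?thesis by (simp add: power2_eq_square mult.assoc)
qed

lemma A_inner_bnd: "\<bar>A u \<bullet> v\<bar> \<le> L * norm u * norm v"
proof -
  have "\<bar>A u \<bullet> v\<bar> \<le> norm (A u) * norm v" by (rule Cauchy_Schwarz_ineq2)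
  also have "\<dots> \<le> L * norm u * norm v" by (intro mult_right_mono A_bnd) auto
  finally show ?thesis .
qed

lemma norm_le_A: "lam * norm v \<le> norm (A v)"
proof (cases "v = 0")
  case False
  have "lam * (norm v)\<^sup>2 \<le> norm (A v) * norm v" using A_pos norm_cauchy_schwarz order_trans by blast
  then show ?thesis using False by (simp add: power2_eq_square mult.assoc[symmetric] mult_le_cancel_right)
qed simp

lemma F_lip: "norm (F u - F v) \<le> LF * norm (u - v)"
  using lipschitz_onD[OF lipF] by (simp add: dist_norm)

lemma couple: "A (u - v) \<bullet> (F u - F v) \<ge> 0"
  using mc unfolding monotone_couple_def by (metis A_diff)

lemma xd_sol: "solr 0 xd" using xdS by (simp add: Sol_def solr_def)

lemma A_surj: "surj A"
proof -
  have "\<exists>u. A u = f" for f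
  proof (rule sm_surj[OF lam])
    show "\<forall>x y. lam * (norm (x - y))\<^sup>2 \<le> (A x - A y) \<bullet> (x - y)"
      using A_pos by (simp add: A_diff)
    show "\<forall>x y. norm (A x - A y) \<le> L * norm (x - y)" using A_bnd by (simp add: A_diff)
  qed
  then show ?thesis by (metis surjI)
qed

lemma A_inj: "inj A"
proof (rule injI)
  fix u v assume "A u = A v"
  then have "A (u - v) = 0" by (simp add: A_diff[symmetric])
  then have "lam * norm (u - v) \<le> 0" using norm_le_A[of "u - v"] by simp
  then show "u = v" using lam by (simp add: mult_le_0_iff)
qed

lemma KI:
  assumes "solr a za" "solr b zb"
  shows "A (za - zb) \<bullet> (a *\<^sub>R za - b *\<^sub>R zb) \<le> 0"
proof -
  have 1: "A za \<bullet> ((F zb + b *\<^sub>R zb) - (F za + a *\<^sub>R za)) \<ge> 0" using assms unfolding solr_def by blast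
  have 2: "A zb \<bullet> ((F za + a *\<^sub>R za) - (F zb + b *\<^sub>R zb)) \<ge> 0" using assms unfolding solr_def by blast
  have 3: "A (za - zb) \<bullet> (F za - F zb) \<ge> 0" by (rule couple)
  have "A (za - zb) \<bullet> ((F zb + b *\<^sub>R zb) - (F za + a *\<^sub>R za)) \<ge> 0"
    using 1 2 unfolding A_diff[symmetric] by (simp add: inner_diff_left inner_diff_right)
  then show ?thesis using 3 by (simp add: inner_diff_right inner_add_right algebra_simps)
qed

lemma exist_reg:
  assumes a: "a > 0"
  shows "\<exists>z. solr a z"
proof -
  define B where "B = inv A"
  have AB: "A (B u) = u" for u unfolding B_def using A_surj by (simp add: surj_f_inv_f)
  have BA: "B (A z) = z" for z unfolding B_def using A_inj by (simp add: inv_f_f)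
  define G where "G = (\<lambda>u. F (B u) + a *\<^sub>R B u)"
  define mG where "mG = a * lam / L\<^sup>2"
  define LG where "LG = (LF + a) / lam"
  have mG: "mG > 0" using a lam L_pos by (simp add: mG_def)
  have smG: "(G u - G v) \<bullet> (u - v) \<ge> mG * (norm (u - v))\<^sup>2" for u v
  proof -
    define d where "d = B u - B v"
    have uv: "u - v = A d" by (simp add: d_def A_diff[symmetric] AB)
    have "(G u - G v) \<bullet> (u - v) = A d \<bullet> (F (B u) - F (B v)) + a * (A d \<bullet> d)"
      by (simp add: G_def uv d_def inner_commute algebra_simps inner_diff_right inner_add_right)
    moreover have "A d \<bullet> (F (B u) - F (B v)) \<ge> 0" using couple[of "B u" "B v"] by (simp add: d_def)
    moreover have "a * (lam * (norm d)\<^sup>2) \<le> a * (A d \<bullet> d)" using A_pos a by simp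
    moreover have "mG * (norm (u - v))\<^sup>2 \<le> a * (lam * (norm d)\<^sup>2)"
    proof -
      have "norm (u - v) \<le> L * norm d" using A_bnd uv by simp
      then have "(norm (u - v))\<^sup>2 \<le> (L * norm d)\<^sup>2" by (rule power_mono) simp
      then have "mG * (norm (u - v))\<^sup>2 \<le> mG * (L * norm d)\<^sup>2" using mG by simp
      also have "\<dots> = a * (lam * (norm d)\<^sup>2)" using L_pos by (simp add: mG_def power_mult_distrib)
      finally show ?thesis .
    qed
    ultimately show ?thesis by linarith
  qed
  have lipG: "norm (G u - G v) \<le> LG * norm (u - v)" for u v
  proof -
    define d where "d = B u - B v"
    have uv: "u - v = A d" by (simp add: d_def A_diff[symmetric] AB)
    have "G u - G v = (F (B u) - F (B v)) + a *\<^sub>R d" by (simp add: G_def d_def algebra_simps)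
    then have "norm (G u - G v) \<le> LF * norm d + a * norm d"
      using F_lip[of "B u" "B v"] a norm_triangle_le[of "F (B u) - F (B v)" "a *\<^sub>R d"]
      by (simp add: d_def)
    also have "\<dots> = (LF + a) * norm d" by (simp add: algebra_simps)
    also have "\<dots> \<le> (LF + a) * (norm (u - v) / lam)"
      using norm_le_A[of d] uv lam LF_nn a by (intro mult_left_mono) (auto simp: field_simps)
    finally show ?thesis by (simp add: LG_def)
  qed
  have Gsurj: "\<forall>w. \<exists>u. G u = w" using sm_surj[OF mG] smG lipG by blast
  define K where "K = (\<lambda>w. SOME u. G u = w)"
  have GK: "G (K w) = w" for w unfolding K_def using Gsurj by (metis (mono_tags) someI_ex)
  define LG' where "LG' = max LG mG"
  have LG': "LG' > 0" "norm (G u - G v) \<le> LG' * norm (u - v)" for u v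
    using mG lipG[of u v] by (auto simp: LG'_def intro: order_trans[OF _ mult_right_mono])
  define mK where "mK = mG / LG'\<^sup>2"
  have mK: "mK > 0" using mG LG' by (simp add: mK_def)
  have smK: "(K w - K w') \<bullet> (w - w') \<ge> mK * (norm (w - w'))\<^sup>2" for w w'
  proof -
    have "norm (w - w') \<le> LG' * norm (K w - K w')" using LG'(2)[of "K w" "K w'"] by (simp add: GK)
    then have "(norm (w - w'))\<^sup>2 \<le> (LG' * norm (K w - K w'))\<^sup>2" by (rule power_mono) simp
    then have "mK * (norm (w - w'))\<^sup>2 \<le> mK * (LG' * norm (K w - K w'))\<^sup>2" using mK by simp
    also have "\<dots> = mG * (norm (K w - K w'))\<^sup>2" using LG' by (simp add: mK_def power_mult_distrib)
    also have "\<dots> \<le> (G (K w) - G (K w')) \<bullet> (K w - K w')" by (rule smG)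
    finally show ?thesis by (simp add: GK inner_commute)
  qed
  have lipK: "norm (K w - K w') \<le> (1 / mG) * norm (w - w')" for w w'
  proof (cases "K w = K w'")
    case False
    have "mG * (norm (K w - K w'))\<^sup>2 \<le> (w - w') \<bullet> (K w - K w')" using smG[of "K w" "K w'"] by (simp add: GK)
    also have "\<dots> \<le> norm (w - w') * norm (K w - K w')" by (rule norm_cauchy_schwarz)
    finally have "mG * norm (K w - K w') \<le> norm (w - w')"
      using False by (simp add: power2_eq_square mult.assoc[symmetric] mult_le_cancel_right)
    then show ?thesis using mG by (simp add: field_simps)
  qed (use mG in simp)
  obtain w where w: "w \<in> C" "\<forall>y\<in>C. K w \<bullet> (y - w) \<ge> 0"
    using sm_vi_exists[OF hproj_axioms mK] smK lipK by blast
  define z where "z = B (K w)"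
  have Az: "A z = K w" by (simp add: z_def AB)
  have Fz: "F z + a *\<^sub>R z = w" using GK[of w] by (simp add: G_def z_def)
  show ?thesis unfolding solr_def using w by (intro exI[of _ z]) (simp add: Az Fz)
qed

definition zz where "zz a = (SOME z. solr a z)"
lemma zz: "a > 0 \<Longrightarrow> solr a (zz a)" unfolding zz_def using exist_reg by (metis someI_ex)

end


context setting begin

lemma cancel_sq:
  fixes x a c :: real assumes "x > 0" "a * x\<^sup>2 \<le> c * x" shows "a * x \<le> c"
proof -
  have "(a * x) * x \<le> c * x" using assms(2) by (simp add: power2_eq_square mult.assoc)
  then show ?thesis using assms(1) by (rule mult_right_le_imp_le)
qed

lemma nn_lam_sq: "0 \<le> lam * (x::real)\<^sup>2" using lam by simp

definition Q where "Q z = A z \<bullet> z"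
definition M where "M = L * norm xd / lam"
definition Mz where "Mz = L * M / lam"

lemma M_nn: "M \<ge> 0" and Mz_nn: "Mz \<ge> 0" using L_pos lam by (auto simp: M_def Mz_def)

lemma A_cont: "isCont A x"
  using lipschitz_on_continuous_on[OF lipA] by (simp add: continuous_on_eq_continuous_at)
lemma F_cont: "isCont F x"
  using lipschitz_on_continuous_on[OF lipF] by (simp add: continuous_on_eq_continuous_at)

lemma sa_comm: "A u \<bullet> v = A v \<bullet> u" using A_sa by (simp add: inner_commute)

lemma sol_bound:
  assumes "a > 0" "solr a z" shows "norm z \<le> M"
proof -
  have "A (z - xd) \<bullet> (a *\<^sub>R z - 0 *\<^sub>R xd) \<le> 0" by (rule KI[OF assms(2) xd_sol])
  then have "a * (A (z - xd) \<bullet> z) \<le> 0" by simp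
  then have "A (z - xd) \<bullet> z \<le> 0" using assms(1) by (simp add: mult_le_0_iff)
  then have "A z \<bullet> z \<le> A xd \<bullet> z" by (simp add: A_diff[symmetric] inner_diff_left)
  also have "\<dots> \<le> L * norm xd * norm z" using A_inner_bnd[of xd z] by simp
  finally have h: "lam * (norm z)\<^sup>2 \<le> L * norm xd * norm z" using A_pos[of z] by linarith
  have "lam * norm z \<le> L * norm xd" if "z \<noteq> 0"
    using cancel_sq[OF _ h] that by simp
  then have "norm z \<le> M" if "z \<noteq> 0" using that lam by (simp add: M_def pos_le_divide_eq mult.commute)
  then show ?thesis using M_nn by (cases "z = 0") auto
qed

lemma sol_lip:
  assumes "a > 0" "b > 0" "solr a za" "solr b zb"
  shows "norm (za - zb) \<le> \<bar>a - b\<bar> * Mz / b"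
proof -
  define d where "d = za - zb"
  have "A d \<bullet> (a *\<^sub>R za - b *\<^sub>R zb) \<le> 0" unfolding d_def by (rule KI[OF assms(3,4)])
  moreover have "a *\<^sub>R za - b *\<^sub>R zb = b *\<^sub>R d + (a - b) *\<^sub>R za" by (simp add: d_def algebra_simps)
  ultimately have "b * (A d \<bullet> d) + (a - b) * (A d \<bullet> za) \<le> 0" by (simp add: inner_add_right)
  then have "b * (A d \<bullet> d) \<le> (b - a) * (A d \<bullet> za)" by (simp add: algebra_simps)
  also have "\<dots> \<le> \<bar>a - b\<bar> * (L * norm d * norm za)"
  proof -
    have "(b - a) * (A d \<bullet> za) \<le> \<bar>b - a\<bar> * \<bar>A d \<bullet> za\<bar>" by (simp add: abs_mult[symmetric])
    also have "\<dots> \<le> \<bar>a - b\<bar> * (L * norm d * norm za)"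
      by (simp add: abs_minus_commute mult_left_mono A_inner_bnd)
    finally show ?thesis .
  qed
  also have "\<dots> \<le> \<bar>a - b\<bar> * (L * norm d * M)"
    using sol_bound[OF assms(1,3)] L_pos by (intro mult_left_mono) auto
  finally have "b * (lam * (norm d)\<^sup>2) \<le> \<bar>a - b\<bar> * (L * norm d * M)"
    using A_pos[of d] assms(2) by (meson mult_left_mono less_imp_le order_trans)
  then have h: "(b * lam) * (norm d)\<^sup>2 \<le> (\<bar>a - b\<bar> * L * M) * norm d" by (simp add: algebra_simps)
  have "b * lam * norm d \<le> \<bar>a - b\<bar> * L * M" if "d \<noteq> 0"
    using cancel_sq[OF _ h] that by simp
  then have "norm d \<le> \<bar>a - b\<bar> * L * M / (b * lam)" if "d \<noteq> 0"
    using that assms(2) lam by (simp add: pos_le_divide_eq mult.commute)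
  moreover have "\<bar>a - b\<bar> * L * M / (b * lam) = \<bar>a - b\<bar> * Mz / b" by (simp add: Mz_def field_simps)
  moreover have "0 \<le> \<bar>a - b\<bar> * Mz / b" using assms(2) Mz_nn by simp
  ultimately show ?thesis by (cases "d = 0") (auto simp: d_def)
qed

lemma sol_mono:
  assumes "0 \<le> b" "b < a" "solr a za" "solr b zb"
  shows "lam * (norm (za - zb))\<^sup>2 \<le> Q zb - Q za"
proof -
  define d where "d = za - zb"
  have "A d \<bullet> (a *\<^sub>R za - b *\<^sub>R zb) \<le> 0" unfolding d_def by (rule KI[OF assms(3,4)])
  moreover have "a *\<^sub>R za - b *\<^sub>R zb = b *\<^sub>R d + (a - b) *\<^sub>R za" by (simp add: d_def algebra_simps)
  ultimately have 1: "b * (A d \<bullet> d) + (a - b) * (A d \<bullet> za) \<le> 0" by (simp add: inner_add_right)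
  have "A d \<bullet> d \<ge> 0" using A_pos[of d] nn_lam_sq[of "norm d"] by linarith
  then have "b * (A d \<bullet> d) \<ge> 0" using assms(1) by simp
  then have "(a - b) * (A d \<bullet> za) \<le> 0" using 1 by linarith
  then have 2: "A d \<bullet> za \<le> 0" using assms(2) by (simp add: mult_le_0_iff)
  have "A d \<bullet> d = Q zb - Q za + 2 * (A d \<bullet> za)"
    unfolding Q_def d_def A_diff[symmetric]
    by (simp add: inner_diff_left inner_diff_right sa_comm[of zb za])
  then show ?thesis using 2 A_pos[of d] by (simp add: d_def)
qed

lemma zz_conv:
  assumes "e > 0"
  shows "\<exists>a0>0. \<forall>a. 0 < a \<and> a \<le> a0 \<longrightarrow> norm (zz a - xd) < e"
proof -
  define b where "b = (\<lambda>n::nat. 1 / real (Suc n))"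
  have b: "b n > 0" "b (Suc n) < b n" for n by (auto simp: b_def field_simps)
  have bm: "b n \<le> b m" if "m \<le> n" for m n using that by (auto simp: b_def field_simps)
  define z where "z = (\<lambda>n. zz (b n))"
  have zs: "solr (b n) (z n)" for n using zz[OF b(1)] by (simp add: z_def)
  define q where "q = (\<lambda>n. Q (z n))"
  have qxd: "lam * (norm (z n - xd))\<^sup>2 \<le> Q xd - q n" for n
    using sol_mono[OF order_refl b(1) zs xd_sol] by (simp add: q_def)
  have qmono: "lam * (norm (z m - z n))\<^sup>2 \<le> q n - q m" if "m \<le> n" for m n
  proof (cases "m = n")
    case False
    then have "b n < b m" using that by (auto simp: b_def field_simps)
    then show ?thesis using sol_mono[OF less_imp_le[OF b(1)] _ zs zs] by (simp add: q_def)
  qed simp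
  have "incseq q"
  proof (rule incseq_SucI)
    fix n show "q n \<le> q (Suc n)" using qmono[of n "Suc n"] nn_lam_sq[of "norm (z n - z (Suc n))"]
      by linarith
  qed
  moreover have "\<forall>n. q n \<le> Q xd" using qxd nn_lam_sq by (meson diff_ge_0_iff_ge order_trans)
  ultimately obtain qL where qL: "q \<longlonglongrightarrow> qL" "\<forall>n. q n \<le> qL" using incseq_convergent by blast
  have "Cauchy z"
  proof (rule CauchyI)
    fix e :: real assume e: "e > 0"
    have "Cauchy q" using qL(1) convergent_Cauchy convergent_def by blast
    then obtain N where N: "\<forall>m\<ge>N. \<forall>n\<ge>N. norm (q m - q n) < lam * e\<^sup>2"
      using CauchyD[of q "lam * e\<^sup>2"] e lam by auto
    have "norm (z m - z n) < e" if "m \<ge> N" "n \<ge> N" for m n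
    proof -
      have "lam * (norm (z m - z n))\<^sup>2 < lam * e\<^sup>2"
      proof (cases "m \<le> n")
        case True
        have "norm (q m - q n) < lam * e\<^sup>2" using N that by blast
        then have "q n - q m < lam * e\<^sup>2" by (simp add: abs_if split: if_splits)
        then show ?thesis using qmono[OF True] by linarith
      next
        case False
        have "norm (q n - q m) < lam * e\<^sup>2" using N that by blast
        then have "q m - q n < lam * e\<^sup>2" by (simp add: abs_if split: if_splits)
        moreover have "norm (z m - z n) = norm (z n - z m)" by (rule norm_minus_commute)
        ultimately show ?thesis using qmono[of n m] False by simp
      qed
      then have "(norm (z m - z n))\<^sup>2 < e\<^sup>2" using lam by simp
      from power2_less_imp_less[OF this] e show ?thesis by simp
    qed
    then show "\<exists>M. \<forall>m\<ge>M. \<forall>n\<ge>M. norm (z m - z n) < e" by blast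
  qed
  then obtain z0 where z0: "z \<longlonglongrightarrow> z0" using Cauchy_convergent_iff convergent_def by blast
  have b0: "b \<longlonglongrightarrow> 0" unfolding b_def using LIMSEQ_inverse_real_of_nat by (simp add: inverse_eq_divide)
  have Fz: "(\<lambda>n. F (z n) + b n *\<^sub>R z n) \<longlonglongrightarrow> F z0 + 0 *\<^sub>R z0"
    by (intro tendsto_intros isCont_tendsto_compose[OF F_cont z0] b0 z0)
  have Az: "(\<lambda>n. A (z n)) \<longlonglongrightarrow> A z0" by (rule isCont_tendsto_compose[OF A_cont z0])
  have "F z0 \<in> C" using closed_sequentially[OF cl _ Fz] zs unfolding solr_def by auto
  moreover have "A z0 \<bullet> (y - F z0) \<ge> 0" if y: "y \<in> C" for y
  proof -
    have "(\<lambda>n. A (z n) \<bullet> (y - (F (z n) + b n *\<^sub>R z n))) \<longlonglongrightarrow> A z0 \<bullet> (y - (F z0 + 0 *\<^sub>R z0))"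
      by (intro tendsto_intros Az Fz)
    then show ?thesis using zs y unfolding solr_def by (auto intro!: LIMSEQ_le_const)
  qed
  ultimately have z0S: "z0 \<in> Sol A F C" by (simp add: Sol_def)
  have "A (z0 - xd) \<bullet> z0 \<le> 0"
  proof -
    have lim: "(\<lambda>n. A (z n - xd) \<bullet> z n) \<longlonglongrightarrow> A (z0 - xd) \<bullet> z0"
      unfolding A_diff[symmetric] by (intro tendsto_intros Az z0)
    have "A (z n - xd) \<bullet> z n \<le> 0" for n
    proof -
      have "A (z n - xd) \<bullet> (b n *\<^sub>R z n - 0 *\<^sub>R xd) \<le> 0" by (rule KI[OF zs xd_sol])
      then show ?thesis using b(1)[of n] by (simp add: mult_le_0_iff)
    qed
    then show ?thesis using lim by (intro LIMSEQ_le_const2) auto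
  qed
  moreover have "A (z0 - xd) \<bullet> xd \<ge> 0" using xd_min z0S
    by (simp add: A_diff sa_comm[of _ xd] A_sa inner_commute)
  ultimately have "A (z0 - xd) \<bullet> (z0 - xd) \<le> 0" by (simp add: inner_diff_right)
  then have "lam * (norm (z0 - xd))\<^sup>2 \<le> 0" using A_pos[of "z0 - xd"] by linarith
  then have z0xd: "z0 = xd" using lam by (simp add: mult_le_0_iff)
  have "q \<longlonglongrightarrow> Q z0" unfolding q_def Q_def by (intro tendsto_intros Az z0)
  then have "q \<longlonglongrightarrow> Q xd" using z0xd by simp
  then obtain N where N: "\<forall>n\<ge>N. norm (q n - Q xd) < lam * e\<^sup>2"
    using LIMSEQ_D[of q "Q xd" "lam * e\<^sup>2"] assms lam by auto
  show ?thesis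
  proof (intro exI[of _ "b N"] conjI allI impI)
    show "b N > 0" by (rule b(1))
    fix a assume a: "0 < a \<and> a \<le> b N"
    have sa: "solr a (zz a)" using zz a by blast
    have "Q (zz a) \<ge> q N"
    proof (cases "a = b N")
      case True then show ?thesis by (simp add: q_def z_def)
    next
      case False
      then have "a < b N" using a by simp
      from sol_mono[OF _ this zs sa] a nn_lam_sq[of "norm (z N - zz a)"] show ?thesis
        by (simp add: q_def)
    qed
    moreover have "lam * (norm (zz a - xd))\<^sup>2 \<le> Q xd - Q (zz a)"
      using sol_mono[OF order_refl _ sa xd_sol] a by simp
    moreover have "Q xd - q N < lam * e\<^sup>2" using N by auto
    ultimately have "lam * (norm (zz a - xd))\<^sup>2 < lam * e\<^sup>2" by linarith
    then have "(norm (zz a - xd))\<^sup>2 < e\<^sup>2" using lam by simp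
    from power2_less_imp_less[OF this] assms show "norm (zz a - xd) < e" by simp
  qed
qed

end


lemma ac_cont:
  fixes f :: "real \<Rightarrow> 'a::real_normed_vector"
  assumes "abs_cont_on a b f"
  shows "continuous_on {a..b} f"
  unfolding continuous_on_iff
proof (intro ballI allI impI)
  fix t e assume t: "t \<in> {a..b}" and e: "(e::real) > 0"
  obtain d where d: "d > 0" and H0: "\<forall>(n::nat) (u::nat\<Rightarrow>real) v. (\<forall>i<n. a \<le> u i \<and> u i \<le> v i \<and> v i \<le> b) \<and>
        (\<forall>i<n. \<forall>j<n. i \<noteq> j \<longrightarrow> v i \<le> u j \<or> v j \<le> u i) \<and> (\<Sum>i<n. v i - u i) < d
        \<longrightarrow> (\<Sum>i<n. norm (f (v i) - f (u i))) < e"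
    using assms[unfolded abs_cont_on_def, rule_format, OF e] by blast
  note H = H0[rule_format]
  show "\<exists>d>0. \<forall>s\<in>{a..b}. dist s t < d \<longrightarrow> dist (f s) (f t) < e"
  proof (intro exI[of _ d] conjI ballI impI d)
    fix s assume s: "s \<in> {a..b}" "dist s t < d"
    have "(\<Sum>i<(1::nat). norm (f ((\<lambda>_. max s t) i) - f ((\<lambda>_. min s t) i))) < e"
      using H0[rule_format, of 1 "\<lambda>_. min s t" "\<lambda>_. max s t"] s t by (auto simp: dist_real_def max_def min_def abs_if split: if_splits)
    then show "dist (f s) (f t) < e"
      by (cases "s \<le> t") (auto simp: dist_norm norm_minus_commute max_def min_def)
  qed
qed

lemma ac_sub:
  assumes "abs_cont_on a b f" "a \<le> c" "d \<le> b"
  shows "abs_cont_on c d f"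
  unfolding abs_cont_on_def
proof (intro allI impI)
  fix e :: real assume e: "e > 0"
  obtain dd where dd: "dd > 0" and H0: "\<forall>(n::nat) (u::nat\<Rightarrow>real) v. (\<forall>i<n. a \<le> u i \<and> u i \<le> v i \<and> v i \<le> b) \<and>
        (\<forall>i<n. \<forall>j<n. i \<noteq> j \<longrightarrow> v i \<le> u j \<or> v j \<le> u i) \<and> (\<Sum>i<n. v i - u i) < dd
        \<longrightarrow> (\<Sum>i<n. norm (f (v i) - f (u i))) < e"
    using assms(1)[unfolded abs_cont_on_def, rule_format, OF e] by blast
  show "\<exists>dd>0. \<forall>(n::nat) (u::nat\<Rightarrow>real) v. (\<forall>i<n. c \<le> u i \<and> u i \<le> v i \<and> v i \<le> d) \<and>
        (\<forall>i<n. \<forall>j<n. i \<noteq> j \<longrightarrow> v i \<le> u j \<or> v j \<le> u i) \<and> (\<Sum>i<n. v i - u i) < dd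
        \<longrightarrow> (\<Sum>i<n. norm (f (v i) - f (u i))) < e"
  proof (intro exI[of _ dd] conjI allI impI dd)
    fix n :: nat and u v :: "nat \<Rightarrow> real" assume A: "(\<forall>i<n. c \<le> u i \<and> u i \<le> v i \<and> v i \<le> d) \<and>
        (\<forall>i<n. \<forall>j<n. i \<noteq> j \<longrightarrow> v i \<le> u j \<or> v j \<le> u i) \<and> (\<Sum>i<n. v i - u i) < dd"
    then have "\<forall>i<n. a \<le> u i \<and> u i \<le> v i \<and> v i \<le> b" using assms(2,3) by force
    then show "(\<Sum>i<n. norm (f (v i) - f (u i))) < e" using A H0[rule_format, of n u v] by blast
  qed
qed

lemma ac_transfer:
  fixes f :: "real \<Rightarrow> real" and g :: "real \<Rightarrow> 'a::real_normed_vector"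
  assumes g: "abs_cont_on a b g" and K: "K \<ge> 0"
    and bnd: "\<And>u v. u \<in> {a..b} \<Longrightarrow> v \<in> {a..b} \<Longrightarrow> \<bar>f v - f u\<bar> \<le> K * (norm (g v - g u) + \<bar>v - u\<bar>)"
  shows "abs_cont_on a b f"
  unfolding abs_cont_on_def
proof (intro allI impI)
  fix e :: real assume e: "e > 0"
  define K' where "K' = K + 1"
  have K': "K' > 0" "K < K'" using K by (auto simp: K'_def)
  have e2: "e / (2 * K') > 0" using e K' by simp
  obtain d1 where d1: "d1 > 0" and H0: "\<forall>(n::nat) (u::nat\<Rightarrow>real) v. (\<forall>i<n. a \<le> u i \<and> u i \<le> v i \<and> v i \<le> b) \<and>
        (\<forall>i<n. \<forall>j<n. i \<noteq> j \<longrightarrow> v i \<le> u j \<or> v j \<le> u i) \<and> (\<Sum>i<n. v i - u i) < d1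
        \<longrightarrow> (\<Sum>i<n. norm (g (v i) - g (u i))) < e / (2 * K')"
    using g[unfolded abs_cont_on_def, rule_format, OF e2] by blast
  note H = H0[rule_format]
  show "\<exists>d>0. \<forall>(n::nat) (u::nat\<Rightarrow>real) v. (\<forall>i<n. a \<le> u i \<and> u i \<le> v i \<and> v i \<le> b) \<and>
        (\<forall>i<n. \<forall>j<n. i \<noteq> j \<longrightarrow> v i \<le> u j \<or> v j \<le> u i) \<and> (\<Sum>i<n. v i - u i) < d
        \<longrightarrow> (\<Sum>i<n. norm (f (v i) - f (u i))) < e"
  proof (intro exI[of _ "min d1 (e / (2 * K'))"] conjI allI impI)
    show "min d1 (e / (2 * K')) > 0" using d1 e2 by simp
    fix n :: nat and u v :: "nat \<Rightarrow> real"
    assume A: "(\<forall>i<n. a \<le> u i \<and> u i \<le> v i \<and> v i \<le> b) \<and>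
        (\<forall>i<n. \<forall>j<n. i \<noteq> j \<longrightarrow> v i \<le> u j \<or> v j \<le> u i) \<and> (\<Sum>i<n. v i - u i) < min d1 (e / (2 * K'))"
    have S1: "(\<Sum>i<n. norm (g (v i) - g (u i))) < e / (2 * K')" using A H0[rule_format, of n u v] by auto
    have S2: "(\<Sum>i<n. v i - u i) < e / (2 * K')" using A by auto
    have "(\<Sum>i<n. norm (f (v i) - f (u i))) \<le> (\<Sum>i<n. K * (norm (g (v i) - g (u i)) + (v i - u i)))"
    proof (rule sum_mono)
      fix i assume "i \<in> {..<n}"
      then have "u i \<in> {a..b}" "v i \<in> {a..b}" "u i \<le> v i" using A by auto
      then show "norm (f (v i) - f (u i)) \<le> K * (norm (g (v i) - g (u i)) + (v i - u i))"
        using bnd[of "u i" "v i"] by simp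
    qed
    also have "\<dots> = K * ((\<Sum>i<n. norm (g (v i) - g (u i))) + (\<Sum>i<n. v i - u i))"
      by (simp add: sum_distrib_left sum.distrib distrib_left)
    also have "\<dots> \<le> K * (e / (2 * K') + e / (2 * K'))"
      using S1 S2 K by (intro mult_left_mono) auto
    also have "\<dots> = K * e / K'" by (simp add: field_simps)
    also have "\<dots> < e" using K' e by (simp add: field_simps)
    finally show "(\<Sum>i<n. norm (f (v i) - f (u i))) < e" .
  qed
qed


lemma comp_interval:
  fixes W :: "real set"
  assumes W: "open W" "W \<subseteq> {a<..<b}" and c: "c \<in> components W"
  shows "a \<le> Inf c \<and> Inf c < Sup c \<and> Sup c \<le> b \<and> {Inf c<..<Sup c} \<subseteq> c \<and> c \<subseteq> {Inf c..Sup c}"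
proof -
  have cW: "c \<subseteq> W" using c by (simp add: in_components_subset)
  have cne: "c \<noteq> {}" using c by (simp add: in_components_nonempty)
  have oc: "open c" using open_components[OF W(1) c] .
  have ic: "is_interval c" using in_components_connected[OF c] is_interval_connected_1 by blast
  have bl: "bdd_below c" using cW W(2) by (intro bdd_belowI[of _ a]) auto
  have bu: "bdd_above c" using cW W(2) by (intro bdd_aboveI[of _ b]) auto
  have sub: "c \<subseteq> {Inf c..Sup c}" using bl bu by (auto intro: cInf_lower cSup_upper)
  have aI: "a \<le> Inf c" using cne cW W(2) by (intro cInf_greatest) auto
  have Sb: "Sup c \<le> b" using cne cW W(2) by (intro cSup_least) auto
  obtain x where x: "x \<in> c" using cne by blast
  obtain r where r: "r > 0" "ball x r \<subseteq> c" using oc x open_contains_ball by blast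
  have "x + r/2 \<in> c" using r by (intro subsetD[OF r(2)]) (auto simp: dist_real_def)
  then have "x + r/2 \<le> Sup c" using bu by (intro cSup_upper)
  moreover have "Inf c \<le> x" using bl x by (intro cInf_lower)
  ultimately have lt: "Inf c < Sup c" using r by linarith
  have "{Inf c<..<Sup c} \<subseteq> c"
  proof
    fix t assume t: "t \<in> {Inf c<..<Sup c}"
    obtain x1 where x1: "x1 \<in> c" "x1 < t" using t cne bl by (auto simp: cInf_less_iff)
    obtain x2 where x2: "x2 \<in> c" "t < x2" using t cne bu by (auto simp: less_cSup_iff)
    show "t \<in> c" using ic x1 x2 unfolding is_interval_1 by (meson less_imp_le)
  qed
  then show ?thesis using aI Sb lt sub by blast
qed

lemma ac_lusin_open:
  fixes \<phi> :: "real \<Rightarrow> real"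
  assumes ac: "abs_cont_on a b \<phi>" and N: "N \<subseteq> {a<..<b}" and neg: "negligible N"
  shows "negligible (\<phi> ` N)"
  unfolding negligible_outer_le
proof (intro allI impI)
  fix e :: real assume e: "e > 0"
  have cont: "continuous_on {a..b} \<phi>" by (rule ac_cont[OF ac])
  obtain \<delta> where \<delta>: "\<delta> > 0" and H0: "\<forall>(n::nat) (u::nat\<Rightarrow>real) v. (\<forall>i<n. a \<le> u i \<and> u i \<le> v i \<and> v i \<le> b) \<and>
        (\<forall>i<n. \<forall>j<n. i \<noteq> j \<longrightarrow> v i \<le> u j \<or> v j \<le> u i) \<and> (\<Sum>i<n. v i - u i) < \<delta>
        \<longrightarrow> (\<Sum>i<n. norm (\<phi> (v i) - \<phi> (u i))) < e"
    using ac[unfolded abs_cont_on_def, rule_format, OF e] by blast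
  have Nsets: "N \<in> sets lebesgue" using neg by (rule negligible_imp_sets)
  obtain U where U: "open U" "N \<subseteq> U" "U - N \<in> lmeasurable" "emeasure lebesgue (U - N) < ennreal \<delta>"
    using sets_lebesgue_outer_open[OF Nsets \<delta>] by blast
  define W where "W = U \<inter> {a<..<b}"
  have Wo: "open W" using U(1) by (simp add: W_def open_Int)
  have Wab: "W \<subseteq> {a<..<b}" by (auto simp: W_def)
  have NW: "N \<subseteq> W" using U(2) N by (auto simp: W_def)
  have Wm: "W \<in> lmeasurable" using Wo Wab by (intro lmeasurable_open bounded_subset[OF compact_imp_bounded[OF compact_Icc[of a b]]]) auto
  have Wmeas: "measure lebesgue W < \<delta>"
  proof -
    have Nm: "N \<in> lmeasurable" using neg by (rule negligible_imp_measurable)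
    have "measure lebesgue W \<le> measure lebesgue ((U - N) \<union> N)"
      using U(3) Nm Wm by (intro measure_mono_fmeasurable fmeasurable.Un) (auto simp: W_def)
    also have "\<dots> \<le> measure lebesgue (U - N) + measure lebesgue N"
      using U(3) Nm by (intro measure_Un_le) auto
    also have "measure lebesgue N = 0" using neg by (simp add: negligible_imp_measure0)
    also have "measure lebesgue (U - N) < \<delta>"
      using U(4) U(3) \<delta> by (simp add: emeasure_eq_measure2 ennreal_less_iff)
    finally show ?thesis by simp
  qed
  define \<C> where "\<C> = components W"
  have Cc: "countable \<C>" unfolding \<C>_def
    using open_components[OF Wo] pairwise_disjoint_components[of W]
    by (intro countable_disjoint_open_subsets) (auto simp: pairwise_def disjnt_def)
  define p where "p c = Inf c" for c :: "real set"
  define q where "q c = Sup c" for c :: "real set"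
  have CI: "a \<le> p c \<and> p c < q c \<and> q c \<le> b \<and> {p c<..<q c} \<subseteq> c \<and> c \<subseteq> {p c..q c}" if "c \<in> \<C>" for c
    using comp_interval[OF Wo Wab] that by (simp add: \<C>_def p_def q_def)
  have Cm: "c \<in> lmeasurable" if "c \<in> \<C>" for c
    using open_components[OF Wo] that in_components_subset[of c W] Wab unfolding \<C>_def
    by (intro lmeasurable_open bounded_subset[OF compact_imp_bounded[OF compact_Icc[of a b]]]) auto
  have Cmeas: "measure lebesgue c = q c - p c" if "c \<in> \<C>" for c
  proof -
    have "measure lebesgue {p c<..<q c} \<le> measure lebesgue c"
      using CI[OF that] Cm[OF that] by (intro measure_mono_fmeasurable) auto
    moreover have "measure lebesgue c \<le> measure lebesgue {p c..q c}"
      using CI[OF that] Cm[OF that] by (intro measure_mono_fmeasurable) auto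
    ultimately show ?thesis using CI[OF that] by simp
  qed
  have Cdisj: "q c \<le> p c' \<or> q c' \<le> p c" if "c \<in> \<C>" "c' \<in> \<C>" "c \<noteq> c'" for c c'
  proof (rule ccontr)
    assume "\<not> ?thesis"
    then have lt: "max (p c) (p c') < min (q c) (q c')" using CI[OF that(1)] CI[OF that(2)] by auto
    define m where "m = (max (p c) (p c') + min (q c) (q c')) / 2"
    have "m \<in> {p c<..<q c}" "m \<in> {p c'<..<q c'}" using lt by (auto simp: m_def max_def min_def split: if_splits)
    then have "m \<in> c" "m \<in> c'" using CI[OF that(1)] CI[OF that(2)] by blast+
    moreover have "c \<inter> c' = {}" using pairwise_disjoint_components[of W] that
      unfolding \<C>_def pairwise_def by blast
    ultimately show False by blast
  qed
  have contc: "continuous_on {p c..q c} \<phi>" if "c \<in> \<C>" for c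
    using continuous_on_subset[OF cont] CI[OF that] by auto
  define s where "s c = (SOME x. x \<in> {p c..q c} \<and> (\<forall>y\<in>{p c..q c}. \<phi> x \<le> \<phi> y))" for c
  define t where "t c = (SOME x. x \<in> {p c..q c} \<and> (\<forall>y\<in>{p c..q c}. \<phi> y \<le> \<phi> x))" for c
  have st: "s c \<in> {p c..q c} \<and> (\<forall>y\<in>{p c..q c}. \<phi> (s c) \<le> \<phi> y) \<and>
            t c \<in> {p c..q c} \<and> (\<forall>y\<in>{p c..q c}. \<phi> y \<le> \<phi> (t c))" if "c \<in> \<C>" for c
  proof -
    have ne: "{p c..q c} \<noteq> {}" using CI[OF that] by auto
    have "\<exists>x\<in>{p c..q c}. \<forall>y\<in>{p c..q c}. \<phi> x \<le> \<phi> y"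
      using continuous_attains_inf[OF compact_Icc ne contc[OF that]] .
    then have 1: "s c \<in> {p c..q c} \<and> (\<forall>y\<in>{p c..q c}. \<phi> (s c) \<le> \<phi> y)"
      unfolding s_def by (rule someI2_bex) auto
    have "\<exists>x\<in>{p c..q c}. \<forall>y\<in>{p c..q c}. \<phi> y \<le> \<phi> x"
      using continuous_attains_sup[OF compact_Icc ne contc[OF that]] .
    then have 2: "t c \<in> {p c..q c} \<and> (\<forall>y\<in>{p c..q c}. \<phi> y \<le> \<phi> (t c))"
      unfolding t_def by (rule someI2_bex) auto
    show ?thesis using 1 2 by blast
  qed
  define J where "J c = {\<phi> (s c) .. \<phi> (t c)}" for c
  have stle: "\<phi> (s c) \<le> \<phi> (t c)" if "c \<in> \<C>" for c using st[OF that] by blast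
  have Jm: "measure lebesgue (J c) = \<phi> (t c) - \<phi> (s c)" if "c \<in> \<C>" for c
    using stle[OF that] by (simp add: J_def)
  have key: "(\<Sum>c\<in>I. \<phi> (t c) - \<phi> (s c)) \<le> e" if I: "I \<subseteq> \<C>" "finite I" for I
  proof -
    obtain h where h: "bij_betw h {0..<card I} I" using ex_bij_betw_nat_finite[OF I(2)] by blast
    define n where "n = card I"
    have hI: "h i \<in> I" if "i < n" for i using h that by (auto simp: n_def bij_betw_def)
    have hinj: "h i \<noteq> h j" if "i < n" "j < n" "i \<noteq> j" for i j
      using h that by (auto simp: n_def bij_betw_def inj_on_def)
    define u where "u i = min (s (h i)) (t (h i))" for i
    define v where "v i = max (s (h i)) (t (h i))" for i
    have uv: "p (h i) \<le> u i \<and> u i \<le> v i \<and> v i \<le> q (h i)" if "i < n" for i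
      using st[of "h i"] hI[OF that] I(1) by (auto simp: u_def v_def)
    have c1: "\<forall>i<n. a \<le> u i \<and> u i \<le> v i \<and> v i \<le> b"
    proof (intro allI impI)
      fix i assume i: "i < n"
      then show "a \<le> u i \<and> u i \<le> v i \<and> v i \<le> b" using uv[OF i] CI[of "h i"] hI[OF i] I(1) by force
    qed
    have c2: "\<forall>i<n. \<forall>j<n. i \<noteq> j \<longrightarrow> v i \<le> u j \<or> v j \<le> u i"
    proof (intro allI impI)
      fix i j assume ij: "i < n" "j < n" "i \<noteq> j"
      have "q (h i) \<le> p (h j) \<or> q (h j) \<le> p (h i)"
        using Cdisj[of "h i" "h j"] hI ij hinj I(1) by blast
      then show "v i \<le> u j \<or> v j \<le> u i" using uv[OF ij(1)] uv[OF ij(2)] by auto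
    qed
    have sumq: "(\<Sum>i<n. v i - u i) \<le> (\<Sum>c\<in>I. q c - p c)"
    proof -
      have "(\<Sum>i<n. v i - u i) \<le> (\<Sum>i<n. q (h i) - p (h i))"
        using uv by (intro sum_mono) force
      also have "\<dots> = (\<Sum>c\<in>I. q c - p c)"
        using sum.reindex_bij_betw[OF h, of "\<lambda>c. q c - p c"] by (simp add: n_def atLeast0LessThan)
      finally show ?thesis .
    qed
    also have "(\<Sum>c\<in>I. q c - p c) = (\<Sum>c\<in>I. measure lebesgue c)"
      using Cmeas I(1) by (intro sum.cong) auto
    also have "\<dots> = measure lebesgue (\<Union>c\<in>I. c)"
    proof (rule measure_finite_Union[symmetric, OF I(2)])
      show "(\<lambda>c. c) ` I \<subseteq> sets lebesgue" using Cm I(1) by (auto simp: fmeasurable_def)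
      show "disjoint_family_on (\<lambda>c. c) I" using pairwise_disjoint_components[of W] I(1)
        unfolding disjoint_family_on_def pairwise_def \<C>_def by blast
      fix c assume "c \<in> I"
      then have "c \<in> lmeasurable" using Cm I(1) by blast
      from fmeasurableD2[OF this] show "emeasure lebesgue c \<noteq> \<infinity>" by simp
    qed
    also have "\<dots> \<le> measure lebesgue W"
    proof (rule measure_mono_fmeasurable)
      show "(\<Union>c\<in>I. c) \<subseteq> W" using I(1) unfolding \<C>_def by (auto dest: in_components_subset)
      show "(\<Union>c\<in>I. c) \<in> sets lebesgue" using I Cm by (intro sets.finite_UN) (auto intro: fmeasurableD)
      show "W \<in> lmeasurable" by (rule Wm)
    qed
    finally have c3: "(\<Sum>i<n. v i - u i) < \<delta>" using Wmeas by linarith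
    have "(\<Sum>i<n. norm (\<phi> (v i) - \<phi> (u i))) < e" using H0 c1 c2 c3 by blast
    moreover have "norm (\<phi> (v i) - \<phi> (u i)) = \<phi> (t (h i)) - \<phi> (s (h i))" if "i < n" for i
      using stle[of "h i"] hI[OF that] I(1) by (auto simp: u_def v_def min_def max_def)
    ultimately have "(\<Sum>i<n. \<phi> (t (h i)) - \<phi> (s (h i))) < e" by simp
    moreover have "(\<Sum>i<n. \<phi> (t (h i)) - \<phi> (s (h i))) = (\<Sum>c\<in>I. \<phi> (t c) - \<phi> (s c))"
      using sum.reindex_bij_betw[OF h, of "\<lambda>c. \<phi> (t c) - \<phi> (s c)"] by (simp add: n_def atLeast0LessThan)
    ultimately show ?thesis by simp
  qed
  have bound: "measure lebesgue (\<Union>c\<in>I. J c) \<le> e" if "I \<subseteq> \<C>" "finite I" for I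
  proof -
    have "measure lebesgue (\<Union>c\<in>I. J c) \<le> (\<Sum>c\<in>I. measure lebesgue (J c))"
      using that by (intro measure_UNION_le) (auto simp: J_def)
    also have "\<dots> = (\<Sum>c\<in>I. \<phi> (t c) - \<phi> (s c))" using Jm that by (intro sum.cong) auto
    also have "\<dots> \<le> e" using key[OF that] .
    finally show ?thesis .
  qed
  have Jfm: "J c \<in> lmeasurable" for c by (simp add: J_def)
  have T1: "(\<Union>c\<in>\<C>. J c) \<in> lmeasurable" using fmeasurable_UN_bound[OF Cc, of J lebesgue e] Jfm bound by blast
  have T2: "measure lebesgue (\<Union>c\<in>\<C>. J c) \<le> e" using measure_UN_bound[OF Cc, of J lebesgue e] Jfm bound by blast
  have T3: "\<phi> ` N \<subseteq> (\<Union>c\<in>\<C>. J c)"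
  proof
    fix y assume "y \<in> \<phi> ` N"
    then obtain x where x: "x \<in> N" "y = \<phi> x" by blast
    then have "x \<in> \<Union>\<C>" using NW by (auto simp: \<C>_def)
    then obtain c where c: "c \<in> \<C>" "x \<in> c" by blast
    then have "x \<in> {p c..q c}" using CI by blast
    then have "\<phi> x \<in> J c" using st[OF c(1)] by (auto simp: J_def)
    then show "y \<in> (\<Union>c\<in>\<C>. J c)" using c x by blast
  qed
  show "\<exists>T. \<phi> ` N \<subseteq> T \<and> T \<in> lmeasurable \<and> measure lebesgue T \<le> e"
    using T1 T2 T3 by blast
qed

lemma ac_lusin:
  fixes \<phi> :: "real \<Rightarrow> real"
  assumes ac: "abs_cont_on a b \<phi>" and N: "N \<subseteq> {a..b}" and neg: "negligible N"
  shows "negligible (\<phi> ` N)"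
proof -
  have "N \<inter> {a<..<b} \<subseteq> {a<..<b}" by blast
  moreover have "negligible (N \<inter> {a<..<b})" using neg by (rule negligible_subset) auto
  ultimately have "negligible (\<phi> ` (N \<inter> {a<..<b}))" by (rule ac_lusin_open[OF ac])
  moreover have "\<phi> ` N \<subseteq> \<phi> ` (N \<inter> {a<..<b}) \<union> {\<phi> a, \<phi> b}"
  proof
    fix y assume "y \<in> \<phi> ` N"
    then obtain x where x: "x \<in> N" "y = \<phi> x" by blast
    then have "x \<in> {a<..<b} \<or> x = a \<or> x = b" using N by force
    then show "y \<in> \<phi> ` (N \<inter> {a<..<b}) \<union> {\<phi> a, \<phi> b}" using x by blast
  qed
  ultimately show ?thesis
    by (meson negligible_Un negligible_finite finite.emptyI finite_insert negligible_subset)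
qed


lemma mono_dini:
  fixes \<phi> :: "real \<Rightarrow> real"
  assumes ab: "a \<le> b" and ac: "abs_cont_on a b \<phi>" and neg: "negligible N0"
    and D: "\<And>t \<eta>. t \<in> {a..<b} \<Longrightarrow> t \<notin> N0 \<Longrightarrow> \<eta> > 0 \<Longrightarrow> eventually (\<lambda>s. \<phi> s - \<phi> t \<le> \<eta> * (s - t)) (at_right t)"
  shows "\<phi> b \<le> \<phi> a"
proof (rule ccontr)
  assume "\<not> ?thesis"
  then have lt: "\<phi> a < \<phi> b" by simp
  then have ab': "a < b" using ab by (cases "a = b") auto
  define \<epsilon> where "\<epsilon> = (\<phi> b - \<phi> a) / (2 * (b - a))"
  have \<epsilon>: "\<epsilon> > 0" using lt ab' by (simp add: \<epsilon>_def)
  define \<psi> where "\<psi> t = \<phi> t - \<epsilon> * t" for t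
  have ac\<psi>: "abs_cont_on a b \<psi>"
  proof (rule ac_transfer[OF ac, of "max 1 \<epsilon>"])
    fix u v
    have e1: "\<psi> v - \<psi> u = (\<phi> v - \<phi> u) - \<epsilon> * (v - u)" by (simp add: \<psi>_def algebra_simps)
    have e2: "\<bar>\<epsilon> * (v - u)\<bar> = \<epsilon> * \<bar>v - u\<bar>" using \<epsilon> by (simp add: abs_mult)
    have "\<bar>\<psi> v - \<psi> u\<bar> \<le> \<bar>\<phi> v - \<phi> u\<bar> + \<epsilon> * \<bar>v - u\<bar>"
      unfolding e1 e2[symmetric] by (rule abs_triangle_ineq4)
    also have "\<dots> \<le> max 1 \<epsilon> * (norm (\<phi> v - \<phi> u) + \<bar>v - u\<bar>)"
    proof -
      have "\<bar>\<phi> v - \<phi> u\<bar> \<le> max 1 \<epsilon> * \<bar>\<phi> v - \<phi> u\<bar>" using mult_right_mono[of 1 "max 1 \<epsilon>" "\<bar>\<phi> v - \<phi> u\<bar>"] by simp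
      moreover have "\<epsilon> * \<bar>v - u\<bar> \<le> max 1 \<epsilon> * \<bar>v - u\<bar>" by (intro mult_right_mono) auto
      ultimately show ?thesis by (simp add: distrib_left)
    qed
    finally show "\<bar>\<psi> v - \<psi> u\<bar> \<le> max 1 \<epsilon> * (norm (\<phi> v - \<phi> u) + \<bar>v - u\<bar>)" .
  qed simp
  have cont: "continuous_on {a..b} \<psi>" by (rule ac_cont[OF ac\<psi>])
  define N' where "N' = N0 \<inter> {a..b}"
  have negN': "negligible (\<psi> ` N')"
    by (rule ac_lusin[OF ac\<psi>]) (use neg in \<open>auto simp: N'_def intro: negligible_subset\<close>)
  have \<psi>ab: "\<psi> a < \<psi> b"
  proof -
    have h1: "\<psi> b - \<psi> a = (\<phi> b - \<phi> a) - \<epsilon> * (b - a)" by (simp add: \<psi>_def algebra_simps)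
    have h2: "\<epsilon> * (b - a) = (\<phi> b - \<phi> a) / 2" using ab' by (simp add: \<epsilon>_def field_simps)
    have "\<psi> b - \<psi> a = (\<phi> b - \<phi> a) / 2" using h1 h2 by (simp add: field_simps)
    moreover have "(\<phi> b - \<phi> a) / 2 > 0" using lt by simp
    ultimately have "\<psi> b - \<psi> a > 0" by simp
    then show ?thesis by simp
  qed
  have "\<not> {\<psi> a<..<\<psi> b} \<subseteq> \<psi> ` N'"
  proof
    assume "{\<psi> a<..<\<psi> b} \<subseteq> \<psi> ` N'"
    then have "negligible {\<psi> a<..<\<psi> b}" using negN' negligible_subset by blast
    then show False using negligible_interval(2)[of "\<psi> a" "\<psi> b"] \<psi>ab by simp
  qed
  then obtain y where y0: "y \<in> {\<psi> a<..<\<psi> b}" "y \<notin> \<psi> ` N'" by blast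
  then have y: "\<psi> a < y" "y < \<psi> b" "y \<notin> \<psi> ` N'" by auto
  define S where "S = {a..b} \<inter> \<psi> -` {..y}"
  have Scl: "closed S" unfolding S_def by (rule continuous_closed_preimage[OF cont]) auto
  have aS: "a \<in> S" using y ab by (auto simp: S_def)
  have Sbd: "bdd_above S" by (rule bdd_aboveI[of _ b]) (auto simp: S_def)
  define ts where "ts = Sup S"
  have tsS: "ts \<in> S" unfolding ts_def using closed_contains_Sup[OF _ Sbd Scl] aS by blast
  then have ts: "a \<le> ts" "ts \<le> b" "\<psi> ts \<le> y" by (auto simp: S_def)
  have tsb: "ts < b" using ts y(2) by (cases "ts = b") auto
  have above: "\<psi> s > y" if "ts < s" "s \<le> b" for s
  proof (rule ccontr)
    assume "\<not> \<psi> s > y"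
    then have "s \<in> S" using that ts by (auto simp: S_def)
    then have "s \<le> ts" unfolding ts_def using Sbd by (rule cSup_upper)
    then show False using that by simp
  qed
  have tsy: "\<psi> ts = y"
  proof (rule ccontr)
    assume "\<psi> ts \<noteq> y"
    then have "\<psi> ts < y" using ts by simp
    moreover have "continuous_on {ts..b} \<psi>" using continuous_on_subset[OF cont] ts by auto
    ultimately obtain s where s: "ts \<le> s" "s \<le> b" "\<psi> s = y"
      using IVT'[of \<psi> ts y b] y(2) tsb by auto
    then have "s \<noteq> ts" using \<open>\<psi> ts < y\<close> by auto
    then have "ts < s" using s(1) by simp
    then have "\<psi> s > y" using above s(2) by blast
    then show False using s by simp
  qed
  have "ts \<notin> N0"
  proof
    assume "ts \<in> N0"
    then have "ts \<in> N'" using ts by (simp add: N'_def)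
    then show False using y(3) tsy by blast
  qed
  then have ev: "eventually (\<lambda>s. \<phi> s - \<phi> ts \<le> (\<epsilon>/2) * (s - ts)) (at_right ts)"
    using D[of ts "\<epsilon>/2"] ts tsb \<epsilon> by simp
  then obtain b' where b': "b' > ts" "\<And>s. ts < s \<Longrightarrow> s < b' \<Longrightarrow> \<phi> s - \<phi> ts \<le> (\<epsilon>/2) * (s - ts)"
    unfolding eventually_at_right_field by blast
  define s where "s = min b ((ts + b') / 2)"
  have s: "ts < s" "s < b'" "s \<le> b" using b'(1) tsb by (auto simp: s_def min_def)
  define k where "k = \<epsilon> * (s - ts)"
  have "\<phi> s - \<phi> ts \<le> (\<epsilon>/2) * (s - ts)" using b'(2) s by simp
  then have h1: "\<phi> s - \<phi> ts \<le> k / 2" by (simp add: k_def)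
  have h2: "\<psi> s - \<psi> ts = (\<phi> s - \<phi> ts) - k" by (simp add: \<psi>_def k_def algebra_simps)
  have h3: "k > 0" using \<epsilon> s by (simp add: k_def)
  have "\<psi> s < y" using h1 h2 h3 tsy by linarith
  then show False using above[OF s(1) s(3)] by simp
qed


context setting begin

lemma lyap_point:
  assumes a: "a > 0" and m: "m > 0" and sz: "solr a z"
  shows "A (y - z) \<bullet> (metric_proj C ((F y + a *\<^sub>R y) - m *\<^sub>R A y) - (F y + a *\<^sub>R y))
         \<le> ((LF + a)\<^sup>2 / (4 * m) - a * lam) * (norm (y - z))\<^sup>2"
proof -
  define Fa where "Fa w = F w + a *\<^sub>R w" for w
  define p where "p = metric_proj C (Fa y - m *\<^sub>R A y)"
  define q where "q = Fa z"
  define e where "e = y - z"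
  define D where "D = Fa y - Fa z"
  define r where "r = p - q"
  have qC: "q \<in> C" using sz by (simp add: solr_def q_def Fa_def)
  have qP: "metric_proj C (Fa z - m *\<^sub>R A z) = q"
  proof (rule proj_eqI[OF qC], intro ballI)
    fix w assume w: "w \<in> C"
    have "A z \<bullet> (w - q) \<ge> 0" using sz w by (simp add: solr_def q_def Fa_def)
    then show "(Fa z - m *\<^sub>R A z - q) \<bullet> (w - q) \<le> 0" using m by (simp add: q_def)
  qed
  have v1: "((Fa y - m *\<^sub>R A y) - p) \<bullet> (q - p) \<le> 0" unfolding p_def by (rule proj_vi[OF qC])
  have pC: "p \<in> C" unfolding p_def by (rule proj_in)
  have v2: "((Fa z - m *\<^sub>R A z) - q) \<bullet> (p - q) \<le> 0" using proj_vi[OF pC, of "Fa z - m *\<^sub>R A z"] qP by simp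
  have Ae: "A y - A z = A e" by (simp add: e_def A_diff)
  have "(- D + m *\<^sub>R A e + r) \<bullet> r \<le> 0"
  proof -
    have "(- D + m *\<^sub>R A e + r) \<bullet> r = (((Fa y - m *\<^sub>R A y) - p) \<bullet> (q - p)) + ((Fa z - m *\<^sub>R A z) - q) \<bullet> (p - q)"
      unfolding D_def r_def Ae[symmetric]
      by (simp add: inner_diff_left inner_diff_right inner_add_left inner_add_right inner_commute algebra_simps)
    then show ?thesis using v1 v2 by linarith
  qed
  then have h1: "m * (A e \<bullet> r) \<le> D \<bullet> r - r \<bullet> r" by (simp add: inner_add_left inner_diff_left)
  have h2: "D \<bullet> r - r \<bullet> r \<le> (norm D)\<^sup>2 / 4"
  proof -
    have "D \<bullet> r \<le> norm D * norm r" by (rule norm_cauchy_schwarz)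
    moreover have "0 \<le> (norm D / 2 - norm r)\<^sup>2" by simp
    ultimately show ?thesis by (simp add: power2_eq_square power2_norm_eq_inner[symmetric] algebra_simps field_simps)
  qed
  have h3: "A e \<bullet> r \<le> (norm D)\<^sup>2 / (4 * m)"
  proof -
    have "m * (A e \<bullet> r) \<le> (norm D)\<^sup>2 / 4" using h1 h2 by linarith
    then show ?thesis using m by (simp add: field_simps)
  qed
  have h4: "A e \<bullet> D \<ge> a * lam * (norm e)\<^sup>2"
  proof -
    have "D = (F y - F z) + a *\<^sub>R e" by (simp add: D_def Fa_def e_def algebra_simps)
    then have "A e \<bullet> D = A e \<bullet> (F y - F z) + a * (A e \<bullet> e)" by (simp add: inner_add_right)
    moreover have "A e \<bullet> (F y - F z) \<ge> 0" using couple[of y z] by (simp add: e_def)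
    moreover have "a * (lam * (norm e)\<^sup>2) \<le> a * (A e \<bullet> e)" using A_pos[of e] a by simp
    ultimately show ?thesis by (simp add: mult.assoc)
  qed
  have h5: "(norm D)\<^sup>2 \<le> (LF + a)\<^sup>2 * (norm e)\<^sup>2"
  proof -
    have "D = (F y - F z) + a *\<^sub>R e" by (simp add: D_def Fa_def e_def algebra_simps)
    then have "norm D \<le> norm (F y - F z) + norm (a *\<^sub>R e)" using norm_triangle_ineq by metis
    also have "\<dots> \<le> LF * norm e + a * norm e" using F_lip[of y z] a by (simp add: e_def)
    finally have "norm D \<le> (LF + a) * norm e" by (simp add: algebra_simps)
    then have "(norm D)\<^sup>2 \<le> ((LF + a) * norm e)\<^sup>2" by (rule power_mono) simp
    then show ?thesis by (simp add: power_mult_distrib)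
  qed
  have xdot: "metric_proj C ((F y + a *\<^sub>R y) - m *\<^sub>R A y) - (F y + a *\<^sub>R y) = r - D"
    by (simp add: p_def r_def q_def D_def Fa_def)
  have "A e \<bullet> (r - D) \<le> (norm D)\<^sup>2 / (4 * m) - a * lam * (norm e)\<^sup>2"
    using h3 h4 by (simp add: inner_diff_right)
  also have "\<dots> \<le> (LF + a)\<^sup>2 * (norm e)\<^sup>2 / (4 * m) - a * lam * (norm e)\<^sup>2"
    using h5 m by (simp add: divide_right_mono)
  also have "\<dots> = ((LF + a)\<^sup>2 / (4 * m) - a * lam) * (norm e)\<^sup>2" by (simp add: algebra_simps)
  finally show ?thesis unfolding xdot by (simp add: e_def)
qed

end


locale dyn = setting +
  fixes \<alpha> \<alpha>' \<mu> :: "real \<Rightarrow> real" and x :: "real \<Rightarrow> 'a" and x0 :: 'a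
  assumes \<alpha>_pos: "\<forall>t\<ge>0. \<alpha> t > 0"
    and \<alpha>_der: "\<forall>t\<ge>0. (\<alpha> has_real_derivative \<alpha>' t) (at t within {0..})"
    and \<alpha>'_cont: "continuous_on {0..} \<alpha>'"
    and \<mu>_pos: "\<forall>t\<ge>0. \<mu> t > 0"
    and lim1: "(\<alpha> \<longlongrightarrow> 0) at_top"
    and lim2: "filterlim (\<lambda>t. \<alpha> t * \<mu> t) at_top at_top"
    and lim3: "((\<lambda>t. \<alpha>' t / (\<alpha> t)\<^sup>2) \<longlongrightarrow> 0) at_top"
    and int_inf: "filterlim (\<lambda>T. integral {0..T} \<alpha>) at_top at_top"
    and sol: "strong_global_solution
               (\<lambda>t y. metric_proj C ((F y + \<alpha> t *\<^sub>R y) - \<mu> t *\<^sub>R A y) - (F y + \<alpha> t *\<^sub>R y)) x0 x"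
begin

definition z where "z t = zz (\<alpha> t)"
definition e where "e t = x t - z t"
definition V where "V t = A (e t) \<bullet> e t"
definition Gx where "Gx t = metric_proj C ((F (x t) + \<alpha> t *\<^sub>R x t) - \<mu> t *\<^sub>R A (x t)) - (F (x t) + \<alpha> t *\<^sub>R x t)"
definition Bd where "Bd t = 2 * (A (e t) \<bullet> Gx t) + 2 * L * norm (e t) * Mz * \<bar>\<alpha>' t\<bar> / \<alpha> t"

lemma blA: "bounded_linear A"
  by (rule bounded_linear_intro[of A L]) (use A_add A_scale A_bnd in \<open>auto simp: mult.commute\<close>)

lemma \<alpha>_at: assumes "t > 0" shows "(\<alpha> has_real_derivative \<alpha>' t) (at t)"
proof -
  have "(\<alpha> has_real_derivative \<alpha>' t) (at t within {0..})" using \<alpha>_der assms by simp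
  moreover have "at t within {0..} = at t" using assms by (intro at_within_interior) simp
  ultimately show ?thesis by simp
qed

lemma z_sol: "t \<ge> 0 \<Longrightarrow> solr (\<alpha> t) (z t)" using zz \<alpha>_pos by (simp add: z_def)

lemma z_lip: "t \<ge> 0 \<Longrightarrow> s \<ge> 0 \<Longrightarrow> norm (z t - z s) \<le> \<bar>\<alpha> t - \<alpha> s\<bar> * Mz / \<alpha> s"
  using sol_lip[OF _ _ z_sol z_sol] \<alpha>_pos by simp

lemma V_expand: "A (u - w) \<bullet> (u - w) = A u \<bullet> u - 2 * (A u \<bullet> w) + A w \<bullet> w"
  by (simp add: A_diff[symmetric] inner_diff_left inner_diff_right sa_comm[of w u])

lemma Vdini:
  assumes t: "t > 0" and xd: "(x has_vector_derivative Gx t) (at t)" and \<eta>: "\<eta> > 0"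
  shows "eventually (\<lambda>s. V s - V t \<le> (Bd t + \<eta>) * (s - t)) (at_right t)"
proof -
  define c where "c = z t"
  define x' where "x' = Gx t"
  define g where "g s = A (x s - c) \<bullet> (x s - c)" for s
  have gt: "g t = V t" by (simp add: g_def V_def e_def c_def)
  have hx: "(x has_derivative (\<lambda>h. h *\<^sub>R x')) (at t)" using xd by (simp add: has_vector_derivative_def x'_def)
  have hw: "((\<lambda>s. x s - c) has_derivative (\<lambda>h. h *\<^sub>R x')) (at t)"
    using has_derivative_diff[OF hx has_derivative_const[of c]] by simp
  have hAw: "((\<lambda>s. A (x s - c)) has_derivative (\<lambda>h. A (h *\<^sub>R x'))) (at t)"
    by (rule bounded_linear.has_derivative[OF blA hw])
  have hg0: "(g has_derivative (\<lambda>h. A (x t - c) \<bullet> (h *\<^sub>R x') + A (h *\<^sub>R x') \<bullet> (x t - c))) (at t)"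
    unfolding g_def by (rule has_derivative_inner[OF hAw hw])
  have "(\<lambda>h. A (x t - c) \<bullet> (h *\<^sub>R x') + A (h *\<^sub>R x') \<bullet> (x t - c)) = (*) (2 * (A (e t) \<bullet> x'))"
    by (rule ext) (simp add: A_scale sa_comm[of x'] e_def c_def algebra_simps A_diff[symmetric] inner_diff_left)
  then have hg: "(g has_field_derivative (2 * (A (e t) \<bullet> x'))) (at t)"
    using hg0 by (simp add: has_field_derivative_def)
  have L1: "((\<lambda>s. (g s - g t) / (s - t)) \<longlongrightarrow> 2 * (A (e t) \<bullet> x')) (at_right t)"
    using has_field_derivativeD[OF hg] by (rule tendsto_mono[OF at_le, rotated]) simp
  have xcont: "isCont x t" using has_vector_derivative_continuous[OF xd] .
  have L2: "((\<lambda>s. norm (x s - c)) \<longlongrightarrow> norm (e t)) (at_right t)"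
  proof -
    have "((\<lambda>s. norm (x s - c)) \<longlongrightarrow> norm (x t - c)) (at t)"
      by (intro tendsto_intros isCont_tendsto_compose[OF xcont] tendsto_ident_at)
    then show ?thesis unfolding e_def c_def by (rule tendsto_mono[OF at_le, rotated]) simp
  qed
  have ha: "(\<alpha> has_real_derivative \<alpha>' t) (at t)" using \<alpha>_at[OF t] .
  have L3: "((\<lambda>s. \<bar>(\<alpha> s - \<alpha> t) / (s - t)\<bar>) \<longlongrightarrow> \<bar>\<alpha>' t\<bar>) (at_right t)"
  proof -
    have "((\<lambda>s. (\<alpha> s - \<alpha> t) / (s - t)) \<longlongrightarrow> \<alpha>' t) (at_right t)"
      using has_field_derivativeD[OF ha] by (rule tendsto_mono[OF at_le, rotated]) simp
    then show ?thesis by (intro tendsto_intros)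
  qed
  have acont: "isCont \<alpha> t" using DERIV_isCont[OF ha] .
  have L4: "(\<alpha> \<longlongrightarrow> \<alpha> t) (at_right t)"
    using acont unfolding isCont_def by (rule tendsto_mono[OF at_le, rotated]) simp
  have at0: "\<alpha> t > 0" using \<alpha>_pos t by simp
  define qq where "qq s = \<bar>(\<alpha> s - \<alpha> t) / (s - t)\<bar> * Mz / \<alpha> s" for s
  define \<beta> where "\<beta> s = \<bar>\<alpha> s - \<alpha> t\<bar> * Mz / \<alpha> s" for s
  have L5: "(qq \<longlongrightarrow> \<bar>\<alpha>' t\<bar> * Mz / \<alpha> t) (at_right t)"
    unfolding qq_def using at0 by (intro tendsto_intros L3 L4) simp
  have L6: "(\<beta> \<longlongrightarrow> \<bar>\<alpha> t - \<alpha> t\<bar> * Mz / \<alpha> t) (at_right t)"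
    unfolding \<beta>_def using at0 by (intro tendsto_intros L4) simp
  define R where "R s = (g s - g t) / (s - t) + 2 * L * norm (x s - c) * qq s + L * \<beta> s * qq s" for s
  have LR: "(R \<longlongrightarrow> 2 * (A (e t) \<bullet> x') + 2 * L * norm (e t) * (\<bar>\<alpha>' t\<bar> * Mz / \<alpha> t) + L * (\<bar>\<alpha> t - \<alpha> t\<bar> * Mz / \<alpha> t) * (\<bar>\<alpha>' t\<bar> * Mz / \<alpha> t)) (at_right t)"
    unfolding R_def by (intro tendsto_intros L1 L2 L5 L6)
  moreover have "2 * (A (e t) \<bullet> x') + 2 * L * norm (e t) * (\<bar>\<alpha>' t\<bar> * Mz / \<alpha> t) + L * (\<bar>\<alpha> t - \<alpha> t\<bar> * Mz / \<alpha> t) * (\<bar>\<alpha>' t\<bar> * Mz / \<alpha> t) = Bd t"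
    by (simp add: Bd_def x'_def)
  ultimately have LR': "(R \<longlongrightarrow> Bd t) (at_right t)" by simp
  have evR: "eventually (\<lambda>s. R s < Bd t + \<eta>) (at_right t)"
    using order_tendstoD(2)[OF LR'] \<eta> by simp
  have evs: "eventually (\<lambda>s. s > t) (at_right t)" by (rule eventually_at_right_less)
  show ?thesis
    using evR evs
  proof eventually_elim
    case (elim s)
    have s0: "s \<ge> 0" "s > t" using elim t by auto
    have as0: "\<alpha> s > 0" using \<alpha>_pos s0 by simp
    define a' where "a' = x s - c"
    define b' where "b' = z s - c"
    have es: "e s = a' - b'" by (simp add: e_def a'_def b'_def)
    have nb: "norm b' \<le> \<beta> s"
      using z_lip[of t s] s0 t by (simp add: b'_def c_def \<beta>_def norm_minus_commute abs_minus_commute)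
    have \<beta>0: "\<beta> s \<ge> 0" using as0 Mz_nn by (simp add: \<beta>_def)
    have "V s = A a' \<bullet> a' - 2 * (A a' \<bullet> b') + A b' \<bullet> b'" by (simp add: V_def es V_expand)
    also have "\<dots> \<le> g s + 2 * L * norm a' * \<beta> s + L * \<beta> s * \<beta> s"
    proof -
      have "- (A a' \<bullet> b') \<le> L * norm a' * norm b'" using A_inner_bnd[of a' b'] by linarith
      also have "\<dots> \<le> L * norm a' * \<beta> s" using nb L_pos by (intro mult_left_mono) auto
      finally have 1: "- (A a' \<bullet> b') \<le> L * norm a' * \<beta> s" .
      have "A b' \<bullet> b' \<le> L * (norm b')\<^sup>2" by (rule A_quad_le)
      also have "\<dots> \<le> L * (\<beta> s)\<^sup>2" using nb L_pos by (intro mult_left_mono power_mono) auto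
      finally have 2: "A b' \<bullet> b' \<le> L * \<beta> s * \<beta> s" by (simp add: power2_eq_square mult.assoc)
      show ?thesis using 1 2 by (simp add: g_def a'_def)
    qed
    finally have Vs: "V s \<le> g s + 2 * L * norm a' * \<beta> s + L * \<beta> s * \<beta> s" .
    have \<beta>q: "\<beta> s = (s - t) * qq s"
    proof -
      have d: "s - t > 0" using s0 by simp
      define w where "w = \<bar>\<alpha> s - \<alpha> t\<bar> / (s - t)"
      have qw: "qq s = w * Mz / \<alpha> s" using d by (simp add: qq_def w_def abs_divide)
      have sw: "(s - t) * w = \<bar>\<alpha> s - \<alpha> t\<bar>" using d by (simp add: w_def)
      have "(s - t) * qq s = ((s - t) * w) * Mz / \<alpha> s" unfolding qw by (simp only: times_divide_eq_right mult.assoc)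
      then show ?thesis by (simp add: sw \<beta>_def)
    qed
    have "V s - V t \<le> (s - t) * R s"
    proof -
      have "(s - t) * R s = (g s - g t) + 2 * L * norm a' * \<beta> s + L * \<beta> s * \<beta> s"
        using s0 unfolding R_def \<beta>q by (simp add: a'_def field_simps)
      then show ?thesis using Vs gt by linarith
    qed
    also have "\<dots> \<le> (s - t) * (Bd t + \<eta>)" using elim s0 by (intro mult_left_mono) auto
    finally show ?case by (simp add: mult.commute)
  qed
qed

end

context dyn begin

definition \<kappa> where "\<kappa> = lam / (2 * L)"
lemma \<kappa>_pos: "\<kappa> > 0" using lam L_pos by (simp add: \<kappa>_def)

lemma young: fixes X Y c :: real assumes "c > 0" shows "2 * X * Y \<le> c * X\<^sup>2 + Y\<^sup>2 / c"
proof -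
  have "0 \<le> (c * X - Y)\<^sup>2 / c" using assms by simp
  also have "(c * X - Y)\<^sup>2 / c = c * X\<^sup>2 + Y\<^sup>2 / c - 2 * X * Y"
    using assms by (simp add: power2_eq_square field_simps)
  finally show ?thesis by simp
qed

lemma Bbound:
  assumes t: "t > 0" and \<epsilon>: "\<epsilon> > 0"
    and c1: "(LF + \<alpha> t)\<^sup>2 \<le> 2 * lam * \<alpha> t * \<mu> t"
    and c2: "2 * L\<^sup>2 * Mz\<^sup>2 / lam * (\<alpha>' t / (\<alpha> t)\<^sup>2)\<^sup>2 \<le> \<kappa> * \<epsilon>"
  shows "Bd t \<le> - \<kappa> * \<alpha> t * (V t - \<epsilon>)"
proof -
  define a where "a = \<alpha> t"
  define m where "m = \<mu> t"
  define X where "X = norm (e t)"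
  define r where "r = \<alpha>' t / a\<^sup>2"
  have a: "a > 0" using \<alpha>_pos t by (simp add: a_def)
  have m: "m > 0" using \<mu>_pos t by (simp add: m_def)
  have X0: "X \<ge> 0" by (simp add: X_def)
  have h1: "A (e t) \<bullet> Gx t \<le> ((LF + a)\<^sup>2 / (4 * m) - a * lam) * X\<^sup>2"
  proof -
    have sz: "solr a (z t)" using z_sol[of t] t by (simp add: a_def)
    show ?thesis using lyap_point[OF a m sz, of "x t"] by (simp add: Gx_def e_def X_def a_def m_def)
  qed
  have h1': "(LF + a)\<^sup>2 / (4 * m) \<le> a * lam / 2"
  proof -
    have "(LF + a)\<^sup>2 / (4 * m) \<le> (2 * lam * a * m) / (4 * m)"
      using c1 m by (intro divide_right_mono) (auto simp: a_def m_def)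
    also have "\<dots> = a * lam / 2" using m by (simp add: field_simps)
    finally show ?thesis .
  qed
  have h2: "A (e t) \<bullet> Gx t \<le> - (a * lam / 2) * X\<^sup>2"
  proof -
    have "((LF + a)\<^sup>2 / (4 * m) - a * lam) * X\<^sup>2 \<le> (a * lam / 2 - a * lam) * X\<^sup>2"
      using h1' by (intro mult_right_mono) auto
    then show ?thesis using h1 by simp
  qed
  define Y where "Y = L * Mz * a * \<bar>r\<bar>"
  have cpos: "a * lam / 2 > 0" using a lam by simp
  have hy: "2 * X * Y \<le> (a * lam / 2) * X\<^sup>2 + Y\<^sup>2 / (a * lam / 2)" by (rule young[OF cpos])
  have hY: "Y\<^sup>2 / (a * lam / 2) = a * (2 * L\<^sup>2 * Mz\<^sup>2 / lam * r\<^sup>2)"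
    using a lam by (simp add: Y_def power2_eq_square field_simps)
  have hterm: "2 * L * norm (e t) * Mz * \<bar>\<alpha>' t\<bar> / \<alpha> t = 2 * X * Y"
  proof -
    have "\<bar>\<alpha>' t\<bar> = a\<^sup>2 * \<bar>r\<bar>" using a by (simp add: r_def abs_divide)
    then show ?thesis using a by (simp add: X_def Y_def a_def[symmetric] power2_eq_square field_simps)
  qed
  have hc2: "a * (2 * L\<^sup>2 * Mz\<^sup>2 / lam * r\<^sup>2) \<le> a * (\<kappa> * \<epsilon>)"
    using c2 a by (intro mult_left_mono) (auto simp: r_def a_def)
  have hV: "V t \<le> L * X\<^sup>2" unfolding V_def X_def by (rule A_quad_le)
  have hVk: "\<kappa> * a * V t \<le> (a * lam / 2) * X\<^sup>2"
  proof -
    have "\<kappa> * a * V t \<le> \<kappa> * a * (L * X\<^sup>2)" using hV \<kappa>_pos a by (intro mult_left_mono) auto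
    also have "\<dots> = (a * lam / 2) * X\<^sup>2" using L_pos by (simp add: \<kappa>_def field_simps)
    finally show ?thesis .
  qed
  have "Bd t = 2 * (A (e t) \<bullet> Gx t) + 2 * X * Y" by (simp add: Bd_def hterm)
  also have "\<dots> \<le> - (a * lam) * X\<^sup>2 + ((a * lam / 2) * X\<^sup>2 + a * (\<kappa> * \<epsilon>))"
    using h2 hy hY hc2 by linarith
  also have "\<dots> \<le> - \<kappa> * a * V t + a * (\<kappa> * \<epsilon>)" using hVk by linarith
  also have "\<dots> = - \<kappa> * \<alpha> t * (V t - \<epsilon>)" by (simp add: a_def algebra_simps)
  finally show ?thesis .
qed

end


lemma cont_bounded:
  fixes f :: "real \<Rightarrow> 'b::real_normed_vector"
  assumes "continuous_on {a..b} f"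
  shows "\<exists>B. \<forall>s\<in>{a..b}. norm (f s) \<le> B"
proof -
  have "bounded (f ` {a..b})" by (rule compact_imp_bounded[OF compact_continuous_image[OF assms compact_Icc]])
  then show ?thesis unfolding bounded_iff by blast
qed

lemma lip_from_deriv:
  fixes f f' :: "real \<Rightarrow> real"
  assumes der: "\<And>s. s \<in> {a..b} \<Longrightarrow> (f has_real_derivative f' s) (at s within {a..b})"
    and c: "continuous_on {a..b} f'"
  shows "\<exists>K\<ge>0. \<forall>u\<in>{a..b}. \<forall>v\<in>{a..b}. \<bar>f v - f u\<bar> \<le> K * \<bar>v - u\<bar>"
proof -
  obtain B where B: "\<forall>s\<in>{a..b}. norm (f' s) \<le> B" using cont_bounded[OF c] by blast
  define K where "K = max B 0"
  have "\<bar>f v - f u\<bar> \<le> K * \<bar>v - u\<bar>" if "u \<in> {a..b}" "v \<in> {a..b}" for u v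
  proof -
    have "norm (f v - f u) \<le> K * norm (v - u)"
      by (rule field_differentiable_bound[OF convex_real_interval(5) der _ that(2) that(1)])
         (use B in \<open>auto simp: K_def intro: le_max_iff_disj[THEN iffD2]\<close>)
    then show ?thesis by simp
  qed
  moreover have "K \<ge> 0" by (simp add: K_def)
  ultimately show ?thesis by blast
qed

lemma dini_prod:
  fixes Vf Ef :: "real \<Rightarrow> real"
  assumes Ed: "(Ef has_real_derivative dE) (at s)" and Epos: "\<forall>u. Ef u > 0"
    and Vd: "\<And>\<eta>. \<eta> > 0 \<Longrightarrow> eventually (\<lambda>u. Vf u - Vf s \<le> (B + \<eta>) * (u - s)) (at_right s)"
    and key: "B * Ef s + (Vf s - \<epsilon>) * dE \<le> 0" and \<eta>: "\<eta> > 0"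
  shows "eventually (\<lambda>u. (Vf u - \<epsilon>) * Ef u - (Vf s - \<epsilon>) * Ef s \<le> \<eta> * (u - s)) (at_right s)"
proof -
  have Es: "Ef s > 0" using Epos by simp
  define \<eta>1 where "\<eta>1 = \<eta> / (2 * Ef s)"
  have \<eta>1: "\<eta>1 > 0" using \<eta> Es by (simp add: \<eta>1_def)
  have ev1: "eventually (\<lambda>u. Vf u - Vf s \<le> (B + \<eta>1) * (u - s)) (at_right s)" by (rule Vd[OF \<eta>1])
  have LQ: "((\<lambda>u. (Ef u - Ef s) / (u - s)) \<longlongrightarrow> dE) (at_right s)"
    using has_field_derivativeD[OF Ed] by (rule tendsto_mono[OF at_le, rotated]) simp
  have LE: "(Ef \<longlongrightarrow> Ef s) (at_right s)"
    using DERIV_isCont[OF Ed] unfolding isCont_def by (rule tendsto_mono[OF at_le, rotated]) simp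
  define R2 where "R2 u = (B + \<eta>1) * Ef u + (Vf s - \<epsilon>) * ((Ef u - Ef s) / (u - s))" for u
  have LR: "(R2 \<longlongrightarrow> (B + \<eta>1) * Ef s + (Vf s - \<epsilon>) * dE) (at_right s)"
    unfolding R2_def by (intro tendsto_intros LQ LE)
  have "(B + \<eta>1) * Ef s + (Vf s - \<epsilon>) * dE \<le> \<eta> / 2"
  proof -
    have "\<eta>1 * Ef s = \<eta> / 2" using Es by (simp add: \<eta>1_def)
    then show ?thesis using key by (simp add: distrib_right)
  qed
  then have "(B + \<eta>1) * Ef s + (Vf s - \<epsilon>) * dE < \<eta>" using \<eta> by linarith
  then have ev2: "eventually (\<lambda>u. R2 u < \<eta>) (at_right s)" using order_tendstoD(2)[OF LR] by blast
  have ev3: "eventually (\<lambda>u. u > s) (at_right s)" by (rule eventually_at_right_less)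
  show ?thesis using ev1 ev2 ev3
  proof eventually_elim
    case (elim u)
    have us: "u - s > 0" using elim by simp
    have Eu: "Ef u > 0" using Epos by simp
    have "(Vf u - \<epsilon>) * Ef u - (Vf s - \<epsilon>) * Ef s = (Vf u - Vf s) * Ef u + (Vf s - \<epsilon>) * (Ef u - Ef s)"
      by (simp add: algebra_simps)
    also have "\<dots> \<le> ((B + \<eta>1) * (u - s)) * Ef u + (Vf s - \<epsilon>) * (Ef u - Ef s)"
      using elim Eu by (intro add_right_mono mult_right_mono) auto
    also have "\<dots> = (u - s) * R2 u" using us by (simp add: R2_def field_simps)
    also have "\<dots> \<le> (u - s) * \<eta>" using elim us by (intro mult_left_mono) auto
    finally show ?case by (simp add: mult.commute)
  qed
qed


context dyn begin

definition I where "I s = integral {0..s} \<alpha>"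
definition Ef where "Ef t1 s = exp (\<kappa> * (I s - I t1))"

lemma \<alpha>_cont: "continuous_on {0..} \<alpha>"
proof -
  have "continuous (at t within {0..}) \<alpha>" if "t \<in> {0..}" for t
    using \<alpha>_der that by (intro DERIV_continuous) auto
  then show ?thesis using continuous_on_eq_continuous_within by blast
qed

lemma Ider: assumes "s > 0" shows "(I has_real_derivative \<alpha> s) (at s)"
proof -
  have c: "continuous_on {0..s+1} \<alpha>" using \<alpha>_cont by (rule continuous_on_subset) auto
  have "(I has_real_derivative \<alpha> s) (at s within {0..s+1})"
    unfolding I_def by (rule integral_has_real_derivative[OF c]) (use assms in auto)
  moreover have "at s within {0..s+1} = at s" using assms by (intro at_within_interior) auto
  ultimately show ?thesis by simp
qed

lemma Eder: assumes "s > 0" shows "(Ef t1 has_real_derivative (\<kappa> * \<alpha> s * Ef t1 s)) (at s)"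
proof -
  have "((\<lambda>s. exp (\<kappa> * (I s - I t1))) has_real_derivative exp (\<kappa> * (I s - I t1)) * (\<kappa> * (\<alpha> s - 0))) (at s)"
    by (intro DERIV_chain2[OF DERIV_exp] DERIV_cmult DERIV_diff Ider[OF assms] DERIV_const)
  then show ?thesis unfolding Ef_def by (simp add: algebra_simps)
qed

lemma Epos: "Ef t1 s > 0" by (simp add: Ef_def)

lemma ae_set: "\<exists>N0. negligible N0 \<and> (\<forall>t\<ge>0. t \<notin> N0 \<longrightarrow> (x has_vector_derivative Gx t) (at t))"
proof -
  have "AE t in lborel. t \<ge> 0 \<longrightarrow> (x has_vector_derivative Gx t) (at t)"
    using sol unfolding strong_global_solution_def Gx_def by simp
  then obtain N where N: "{t \<in> space lborel. \<not> (t \<ge> 0 \<longrightarrow> (x has_vector_derivative Gx t) (at t))} \<subseteq> N"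
      "emeasure lborel N = 0" "N \<in> sets lborel"
    by (rule AE_E)
  have "N \<in> null_sets lborel" using N by (simp add: null_sets_def)
  then have "negligible N" by (simp add: negligible_iff_null_sets null_sets_completionI)
  moreover have "\<forall>t\<ge>0. t \<notin> N \<longrightarrow> (x has_vector_derivative Gx t) (at t)" using N(1) by auto
  ultimately show ?thesis by blast
qed

lemma x_ac: "T \<ge> 0 \<Longrightarrow> abs_cont_on 0 T x" using sol unfolding strong_global_solution_def by blast

lemma choose_t1:
  assumes \<epsilon>: "\<epsilon> > 0"
  shows "\<exists>t1>0. \<forall>t\<ge>t1. (LF + \<alpha> t)\<^sup>2 \<le> 2 * lam * \<alpha> t * \<mu> t \<and>
            2 * L\<^sup>2 * Mz\<^sup>2 / lam * (\<alpha>' t / (\<alpha> t)\<^sup>2)\<^sup>2 \<le> \<kappa> * \<epsilon>"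
proof -
  have e1: "eventually (\<lambda>t. \<alpha> t < 1) at_top" using order_tendstoD(2)[OF lim1] by simp
  have e2: "eventually (\<lambda>t. (LF + 1)\<^sup>2 / (2 * lam) \<le> \<alpha> t * \<mu> t) at_top"
    using lim2 unfolding filterlim_at_top by blast
  have e3: "eventually (\<lambda>t::real. t \<ge> 1) at_top" by (rule eventually_ge_at_top)
  have "((\<lambda>t. 2 * L\<^sup>2 * Mz\<^sup>2 / lam * (\<alpha>' t / (\<alpha> t)\<^sup>2)\<^sup>2) \<longlongrightarrow> 2 * L\<^sup>2 * Mz\<^sup>2 / lam * 0\<^sup>2) at_top"
    by (intro tendsto_intros lim3)
  then have e4: "eventually (\<lambda>t. 2 * L\<^sup>2 * Mz\<^sup>2 / lam * (\<alpha>' t / (\<alpha> t)\<^sup>2)\<^sup>2 < \<kappa> * \<epsilon>) at_top"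
    using order_tendstoD(2) \<kappa>_pos \<epsilon> by fastforce
  have "eventually (\<lambda>t. (LF + \<alpha> t)\<^sup>2 \<le> 2 * lam * \<alpha> t * \<mu> t \<and>
            2 * L\<^sup>2 * Mz\<^sup>2 / lam * (\<alpha>' t / (\<alpha> t)\<^sup>2)\<^sup>2 \<le> \<kappa> * \<epsilon>) at_top"
    using e1 e2 e3 e4
  proof eventually_elim
    case (elim t)
    have at: "\<alpha> t > 0" using \<alpha>_pos elim by simp
    have "(LF + \<alpha> t)\<^sup>2 \<le> (LF + 1)\<^sup>2" using elim at LF_nn by (intro power_mono) auto
    also have "\<dots> \<le> 2 * lam * (\<alpha> t * \<mu> t)" using elim lam by (simp add: field_simps)
    finally show ?case using elim by (simp add: mult.assoc)
  qed
  then obtain N where N: "\<forall>t\<ge>N. (LF + \<alpha> t)\<^sup>2 \<le> 2 * lam * \<alpha> t * \<mu> t \<and>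
            2 * L\<^sup>2 * Mz\<^sup>2 / lam * (\<alpha>' t / (\<alpha> t)\<^sup>2)\<^sup>2 \<le> \<kappa> * \<epsilon>"
    unfolding eventually_at_top_linorder by blast
  show ?thesis using N by (intro exI[of _ "max N 1"]) auto
qed

end


context dyn begin

lemma z_bound: "s \<ge> 0 \<Longrightarrow> norm (z s) \<le> M" using sol_bound[OF _ z_sol] \<alpha>_pos by simp

lemma V_diff: "V v - V u = A (e v - e u) \<bullet> (e v + e u)"
  by (simp add: V_def A_diff[symmetric] inner_diff_left inner_add_right sa_comm[of "e u" "e v"])

lemma AC_Phi:
  assumes t1: "t1 > 0" and T: "T \<ge> t1"
  shows "abs_cont_on t1 T (\<lambda>u. (V u - \<epsilon>) * Ef t1 u)"
proof -
  have acx: "abs_cont_on t1 T x" using ac_sub[OF x_ac[of T]] t1 T by auto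
  have cx: "continuous_on {t1..T} x" by (rule ac_cont[OF acx])
  obtain Rx where Rx: "\<forall>s\<in>{t1..T}. norm (x s) \<le> Rx" using cont_bounded[OF cx] by blast
  define Re where "Re = Rx + M"
  have eb: "norm (e s) \<le> Re" if "s \<in> {t1..T}" for s
  proof -
    have "norm (e s) \<le> norm (x s) + norm (z s)" unfolding e_def by (rule norm_triangle_ineq4)
    also have "\<dots> \<le> Rx + M" using Rx that z_bound[of s] t1 by (intro add_mono) auto
    finally show ?thesis by (simp add: Re_def)
  qed
  have "norm (e t1) \<le> Re" using eb[of t1] T by simp
  then have Re0: "Re \<ge> 0" using norm_ge_zero[of "e t1"] by linarith
  have ader: "(\<alpha> has_real_derivative \<alpha>' s) (at s within {t1..T})" if "s \<in> {t1..T}" for s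
  proof -
    have "(\<alpha> has_real_derivative \<alpha>' s) (at s within {0..})" using \<alpha>_der that t1 by simp
    moreover have "{t1..T} \<subseteq> {0..}" using t1 by auto
    ultimately show ?thesis by (rule DERIV_subset)
  qed
  have a'c: "continuous_on {t1..T} \<alpha>'" using \<alpha>'_cont by (rule continuous_on_subset) (use t1 in auto)
  obtain Ka where Ka: "Ka \<ge> 0" "\<forall>u\<in>{t1..T}. \<forall>v\<in>{t1..T}. \<bar>\<alpha> v - \<alpha> u\<bar> \<le> Ka * \<bar>v - u\<bar>"
    using lip_from_deriv[OF ader a'c] by blast
  have ac: "continuous_on {t1..T} \<alpha>" using \<alpha>_cont by (rule continuous_on_subset) (use t1 in auto)
  obtain am where am: "am \<in> {t1..T}" "\<forall>s\<in>{t1..T}. \<alpha> am \<le> \<alpha> s"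
    using continuous_attains_inf[OF compact_Icc _ ac] T by auto
  have amp: "\<alpha> am > 0" using \<alpha>_pos am t1 by simp
  define Kz where "Kz = Ka * Mz / \<alpha> am"
  have Kz0: "Kz \<ge> 0" using Ka Mz_nn amp by (simp add: Kz_def)
  have zl: "norm (z v - z u) \<le> Kz * \<bar>v - u\<bar>" if "u \<in> {t1..T}" "v \<in> {t1..T}" for u v
  proof -
    have "norm (z v - z u) \<le> \<bar>\<alpha> v - \<alpha> u\<bar> * Mz / \<alpha> u" using z_lip[of v u] that t1 by simp
    also have "\<dots> \<le> (Ka * \<bar>v - u\<bar>) * Mz / \<alpha> u"
    proof -
      have au: "\<alpha> u > 0" using \<alpha>_pos that t1 by simp
      show ?thesis using Ka that Mz_nn au by (intro divide_right_mono mult_right_mono) auto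
    qed
    also have "\<dots> \<le> (Ka * \<bar>v - u\<bar>) * Mz / \<alpha> am"
    proof -
      have au: "\<alpha> u > 0" using \<alpha>_pos that t1 by simp
      have "\<alpha> am \<le> \<alpha> u" using am that by auto
      then show ?thesis using au amp Mz_nn Ka by (intro divide_left_mono mult_nonneg_nonneg mult_pos_pos) auto
    qed
    also have "\<dots> = Kz * \<bar>v - u\<bar>" by (simp add: Kz_def)
    finally show ?thesis .
  qed
  define E where "E = Ef t1"
  have Ed: "(E has_real_derivative (\<kappa> * \<alpha> s * E s)) (at s within {t1..T})" if "s \<in> {t1..T}" for s
  proof -
    have "(E has_real_derivative (\<kappa> * \<alpha> s * E s)) (at s)" using Eder[of s t1] that t1 by (simp add: E_def)
    then show ?thesis by (rule has_field_derivative_at_within)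
  qed
  have Ec: "continuous_on {t1..T} E"
  proof (rule continuous_at_imp_continuous_on, rule ballI)
    fix s assume "s \<in> {t1..T}"
    then have "s > 0" using t1 by simp
    from DERIV_isCont[OF Eder[OF this, of t1]] show "isCont E s" by (simp add: E_def)
  qed
  have Edc: "continuous_on {t1..T} (\<lambda>s. \<kappa> * \<alpha> s * E s)" by (intro continuous_intros ac Ec)
  obtain KE where KE: "KE \<ge> 0" "\<forall>u\<in>{t1..T}. \<forall>v\<in>{t1..T}. \<bar>E v - E u\<bar> \<le> KE * \<bar>v - u\<bar>"
    using lip_from_deriv[OF Ed Edc] by blast
  obtain Em where Em: "\<forall>s\<in>{t1..T}. norm (E s) \<le> Em" using cont_bounded[OF Ec] by blast
  have "norm (E t1) \<le> Em" using Em T by simp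
  then have Em0: "Em \<ge> 0" using norm_ge_zero[of "E t1"] by linarith
  define K where "K = 2 * L * Re * Em * (1 + Kz) + (L * Re\<^sup>2 + \<bar>\<epsilon>\<bar>) * KE"
  have K0: "K \<ge> 0" using L_pos Re0 Em0 Kz0 KE by (simp add: K_def)
  show ?thesis
  proof (rule ac_transfer[OF acx K0])
    fix u v assume u: "u \<in> {t1..T}" and v: "v \<in> {t1..T}"
    define dx where "dx = norm (x v - x u)"
    define dt where "dt = \<bar>v - u\<bar>"
    have dx0: "dx \<ge> 0" "dt \<ge> 0" by (auto simp: dx_def dt_def)
    have de: "norm (e v - e u) \<le> dx + Kz * dt"
    proof -
      have "e v - e u = (x v - x u) - (z v - z u)" by (simp add: e_def algebra_simps)
      then have "norm (e v - e u) \<le> norm (x v - x u) + norm (z v - z u)" by (metis norm_triangle_ineq4)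
      then show ?thesis using zl[OF u v] by (simp add: dx_def dt_def)
    qed
    have dV: "\<bar>V v - V u\<bar> \<le> 2 * L * Re * (dx + Kz * dt)"
    proof -
      have "\<bar>V v - V u\<bar> \<le> L * norm (e v - e u) * norm (e v + e u)" unfolding V_diff by (rule A_inner_bnd)
      also have "\<dots> \<le> L * (dx + Kz * dt) * (2 * Re)"
      proof (intro mult_mono mult_left_mono de)
        show "norm (e v + e u) \<le> 2 * Re" using eb[OF u] eb[OF v] norm_triangle_ineq[of "e v" "e u"] by linarith
      qed (use L_pos dx0 Kz0 Re0 in auto)
      finally show ?thesis by (simp add: algebra_simps)
    qed
    have Vu: "\<bar>V u - \<epsilon>\<bar> \<le> L * Re\<^sup>2 + \<bar>\<epsilon>\<bar>"
    proof -
      have "\<bar>V u\<bar> \<le> L * norm (e u) * norm (e u)" unfolding V_def by (rule A_inner_bnd)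
      also have "\<dots> \<le> L * Re * Re" using eb[OF u] L_pos Re0 by (intro mult_mono mult_left_mono) auto
      finally show ?thesis by (simp add: power2_eq_square)
    qed
    have Ev: "\<bar>E v\<bar> \<le> Em" using Em v by auto
    have dE: "\<bar>E v - E u\<bar> \<le> KE * dt" using KE u v by (simp add: dt_def)
    have "(V v - \<epsilon>) * E v - (V u - \<epsilon>) * E u = (V v - V u) * E v + (V u - \<epsilon>) * (E v - E u)"
      by (simp add: algebra_simps)
    then have "\<bar>(V v - \<epsilon>) * E v - (V u - \<epsilon>) * E u\<bar> \<le> \<bar>V v - V u\<bar> * \<bar>E v\<bar> + \<bar>V u - \<epsilon>\<bar> * \<bar>E v - E u\<bar>"
      by (simp add: abs_mult[symmetric] abs_triangle_ineq)
    also have "\<dots> \<le> (2 * L * Re * (dx + Kz * dt)) * Em + (L * Re\<^sup>2 + \<bar>\<epsilon>\<bar>) * (KE * dt)"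
      by (intro add_mono mult_mono dV Ev Vu dE) (use L_pos Re0 dx0 Kz0 KE in auto)
    also have "\<dots> \<le> K * (dx + dt)"
    proof -
      define c where "c = 2 * L * Re * Em"
      define d where "d = L * Re\<^sup>2 + \<bar>\<epsilon>\<bar>"
      have c0: "c \<ge> 0" using L_pos Re0 Em0 by (simp add: c_def)
      have d0: "d \<ge> 0" using L_pos by (simp add: d_def)
      have n1: "c * Kz * dx \<ge> 0" using c0 Kz0 dx0 by simp
      have n2: "c * dt \<ge> 0" using c0 dx0 by simp
      have n3: "d * KE * dx \<ge> 0" using d0 KE dx0 by simp
      have l: "(2 * L * Re * (dx + Kz * dt)) * Em + (L * Re\<^sup>2 + \<bar>\<epsilon>\<bar>) * (KE * dt) = c * dx + c * Kz * dt + d * KE * dt"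
        by (simp add: c_def d_def algebra_simps)
      have r: "K * (dx + dt) = c * dx + c * Kz * dx + c * dt + c * Kz * dt + d * KE * dx + d * KE * dt"
        by (simp add: K_def c_def d_def algebra_simps)
      show ?thesis unfolding l r using n1 n2 n3 by linarith
    qed
    finally show "\<bar>(V v - \<epsilon>) * Ef t1 v - (V u - \<epsilon>) * Ef t1 u\<bar> \<le> K * (norm (x v - x u) + \<bar>v - u\<bar>)"
      by (simp add: E_def dx_def dt_def)
  qed
qed

end


context dyn begin

lemma V_small:
  assumes \<epsilon>: "\<epsilon> > 0"
  shows "eventually (\<lambda>T. V T \<le> 2 * \<epsilon>) at_top"
proof -
  obtain t1 where t1: "t1 > 0" and cond: "\<And>t. t \<ge> t1 \<Longrightarrow> (LF + \<alpha> t)\<^sup>2 \<le> 2 * lam * \<alpha> t * \<mu> t \<and>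
            2 * L\<^sup>2 * Mz\<^sup>2 / lam * (\<alpha>' t / (\<alpha> t)\<^sup>2)\<^sup>2 \<le> \<kappa> * \<epsilon>"
    using choose_t1[OF \<epsilon>] by blast
  obtain N0 where N0: "negligible N0" "\<And>t. t \<ge> 0 \<Longrightarrow> t \<notin> N0 \<Longrightarrow> (x has_vector_derivative Gx t) (at t)"
    using ae_set by blast
  have mono: "(V T - \<epsilon>) * Ef t1 T \<le> (V t1 - \<epsilon>) * Ef t1 t1" if T: "T \<ge> t1" for T
  proof (rule mono_dini[of t1 T "\<lambda>u. (V u - \<epsilon>) * Ef t1 u" N0])
    show "t1 \<le> T" by (rule T)
    show "abs_cont_on t1 T (\<lambda>u. (V u - \<epsilon>) * Ef t1 u)" by (rule AC_Phi[OF t1 T])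
    show "negligible N0" by (rule N0(1))
    fix s \<eta> :: real assume s: "s \<in> {t1..<T}" and sN: "s \<notin> N0" and \<eta>: "\<eta> > 0"
    have s0: "s > 0" using s t1 by simp
    have xd: "(x has_vector_derivative Gx s) (at s)" using N0(2)[OF _ sN] s0 by simp
    have Bs: "Bd s \<le> - \<kappa> * \<alpha> s * (V s - \<epsilon>)" using Bbound[OF s0 \<epsilon>] cond[of s] s by simp
    have Es: "Ef t1 s > 0" by (rule Epos)
    have key: "Bd s * Ef t1 s + (V s - \<epsilon>) * (\<kappa> * \<alpha> s * Ef t1 s) \<le> 0"
    proof -
      have "Bd s * Ef t1 s \<le> (- \<kappa> * \<alpha> s * (V s - \<epsilon>)) * Ef t1 s" using Bs Es by (intro mult_right_mono) auto
      then show ?thesis by (simp add: algebra_simps)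
    qed
    show "eventually (\<lambda>u. (V u - \<epsilon>) * Ef t1 u - (V s - \<epsilon>) * Ef t1 s \<le> \<eta> * (u - s)) (at_right s)"
      by (rule dini_prod[OF Eder[OF s0] _ Vdini[OF s0 xd] key \<eta>]) (simp add: Epos)
  qed
  have E1: "Ef t1 t1 = 1" by (simp add: Ef_def)
  define Z where "Z = max 1 (\<bar>V t1 - \<epsilon>\<bar> / \<epsilon>)"
  have Z1: "Z > 0" by (simp add: Z_def)
  have "\<bar>V t1 - \<epsilon>\<bar> / \<epsilon> \<le> Z" by (simp add: Z_def)
  then have Z2: "\<bar>V t1 - \<epsilon>\<bar> \<le> \<epsilon> * Z" using \<epsilon> by (simp add: pos_divide_le_eq mult.commute)
  note Z = Z1 Z2
  have ev1: "eventually (\<lambda>T. I t1 + ln Z / \<kappa> \<le> I T) at_top"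
    using int_inf unfolding filterlim_at_top I_def by blast
  have ev2: "eventually (\<lambda>T::real. T \<ge> t1) at_top" by (rule eventually_ge_at_top)
  show ?thesis using ev1 ev2
  proof eventually_elim
    case (elim T)
    have ET: "Ef t1 T \<ge> Z"
    proof -
      have "ln Z \<le> \<kappa> * (I T - I t1)" using elim \<kappa>_pos by (simp add: field_simps)
      then have "exp (ln Z) \<le> exp (\<kappa> * (I T - I t1))" by simp
      then show ?thesis using Z by (simp add: Ef_def)
    qed
    have EP: "Ef t1 T > 0" by (rule Epos)
    have "(V T - \<epsilon>) * Ef t1 T \<le> V t1 - \<epsilon>" using mono[OF elim(2)] E1 by simp
    also have "\<dots> \<le> \<epsilon> * Z" using Z by linarith
    also have "\<dots> \<le> \<epsilon> * Ef t1 T" using ET \<epsilon> by simp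
    finally have "(V T - \<epsilon>) * Ef t1 T \<le> \<epsilon> * Ef t1 T" .
    then have "V T - \<epsilon> \<le> \<epsilon>" using EP by simp
    then show ?case by simp
  qed
qed

lemma x_conv: "((\<lambda>t. norm (x t - xd)) \<longlongrightarrow> 0) at_top"
proof (rule order_tendstoI)
  fix a :: real assume "a < 0"
  then show "eventually (\<lambda>t. a < norm (x t - xd)) at_top"
    by (intro always_eventually allI) (simp add: less_le_trans[OF _ norm_ge_zero])
next
  fix a :: real assume a: "0 < a"
  obtain a0 where a0: "a0 > 0" "\<And>b. 0 < b \<and> b \<le> a0 \<Longrightarrow> norm (zz b - xd) < a / 2"
    using zz_conv[of "a / 2"] a by auto
  have ev1: "eventually (\<lambda>t. \<alpha> t < a0) at_top" using order_tendstoD(2)[OF lim1 a0(1)] .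
  have ev2: "eventually (\<lambda>t::real. t \<ge> 0) at_top" by (rule eventually_ge_at_top)
  define \<epsilon> where "\<epsilon> = lam * (a / 2)\<^sup>2 / 4"
  have \<epsilon>: "\<epsilon> > 0" using lam a by (simp add: \<epsilon>_def)
  have ev3: "eventually (\<lambda>T. V T \<le> 2 * \<epsilon>) at_top" by (rule V_small[OF \<epsilon>])
  show "eventually (\<lambda>t. norm (x t - xd) < a) at_top" using ev1 ev2 ev3
  proof eventually_elim
    case (elim t)
    have zt: "norm (z t - xd) < a / 2" using a0(2)[of "\<alpha> t"] elim \<alpha>_pos by (simp add: z_def)
    have "lam * (norm (e t))\<^sup>2 \<le> V t" unfolding V_def by (rule A_pos)
    then have "lam * (norm (e t))\<^sup>2 \<le> lam * ((a / 2)\<^sup>2 / 2)" using elim by (simp add: \<epsilon>_def)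
    then have "(norm (e t))\<^sup>2 \<le> (a / 2)\<^sup>2 / 2" using lam by simp
    also have "\<dots> < (a / 2)\<^sup>2" using a by simp
    finally have "(norm (e t))\<^sup>2 < (a / 2)\<^sup>2" .
    from power2_less_imp_less[OF this] a have et: "norm (e t) < a / 2" by simp
    have "x t - xd = e t + (z t - xd)" by (simp add: e_def)
    then have "norm (x t - xd) \<le> norm (e t) + norm (z t - xd)" by (metis norm_triangle_ineq)
    then show ?case using et zt by linarith
  qed
qed

end

theorem theorem3p4:
  fixes A F :: "'a::{real_inner,complete_space} \<Rightarrow> 'a"
    and C :: "'a set"
    and lam L_A L_F :: real
    and \<alpha> \<alpha>' \<mu> :: "real \<Rightarrow> real"
    and x :: "real \<Rightarrow> 'a"
    and x0 u_dag :: 'a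
  assumes C: "C \<noteq> {}" "closed C" "convex C"
    and A1: "lam > 0" "strongly_monotone lam A" "L_A-lipschitz_on UNIV A"
      "L_F-lipschitz_on UNIV F" "seq_weak_weak_cont A" "seq_weak_weak_cont F"
    and A2: "monotone_couple A F"
    and A3: "Sol A F C \<noteq> {}" "convex (A ` Sol A F C)"
    and A_lin: "linear A" and A_sa: "\<forall>u v. A u \<bullet> v = u \<bullet> A v"
    and \<alpha>_pos: "\<forall>t\<ge>0. \<alpha> t > 0"
    and \<alpha>_C1: "\<forall>t\<ge>0. (\<alpha> has_real_derivative \<alpha>' t) (at t within {0..})"
      "continuous_on {0..} \<alpha>'"
    and \<mu>_pos: "\<forall>t\<ge>0. \<mu> t > 0" and \<mu>_cont: "continuous_on {0..} \<mu>"
    and lim1: "(\<alpha> \<longlongrightarrow> 0) at_top"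
    and lim2: "filterlim (\<lambda>t. \<alpha> t * \<mu> t) at_top at_top"
    and lim3: "((\<lambda>t. \<alpha>' t / (\<alpha> t)\<^sup>2) \<longlongrightarrow> 0) at_top"
    and int_inf: "filterlim (\<lambda>T. integral {0..T} \<alpha>) at_top at_top"
    and sol: "strong_global_solution
               (\<lambda>t y. metric_proj C ((F y + \<alpha> t *\<^sub>R y) - \<mu> t *\<^sub>R A y) - (F y + \<alpha> t *\<^sub>R y))
               x0 x"
    and u_dag: "u_dag \<in> A ` Sol A F C"
      "\<forall>v\<in>A ` Sol A F C. inv A u_dag \<bullet> (v - u_dag) \<ge> 0"
  shows "((\<lambda>t. norm (x t - inv A u_dag)) \<longlongrightarrow> 0) at_top"
proof -
  obtain s0 where s0: "s0 \<in> Sol A F C" "u_dag = A s0" using u_dag(1) by blast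
  have injA: "inj A"
  proof (rule injI)
    fix u v assume h: "A u = A v"
    have "lam * (norm (u - v))\<^sup>2 \<le> (A u - A v) \<bullet> (u - v)"
      using A1(2) unfolding strongly_monotone_def by blast
    then have "lam * (norm (u - v))\<^sup>2 \<le> 0" using h by simp
    then show "u = v" using A1(1) by (simp add: mult_le_0_iff)
  qed
  have xd: "inv A u_dag = s0" using s0(2) injA by (simp add: inv_f_f)
  have xmin: "\<forall>s\<in>Sol A F C. inv A u_dag \<bullet> (A s - A (inv A u_dag)) \<ge> 0"
    using u_dag(2) s0(2) xd by auto
  have lin1: "\<And>b1 b2. A (b1 + b2) = A b1 + A b2" using A_lin by (simp add: linear_add)
  have lin2: "\<And>r b. A (r *\<^sub>R b) = r *\<^sub>R A b" using A_lin by (simp add: linear_scale)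
  have xdS: "inv A u_dag \<in> Sol A F C" using xd s0(1) by simp
  interpret hproj C by (unfold_locales) (use C in auto)
  interpret dyn C A F lam L_A L_F "inv A u_dag" \<alpha> \<alpha>' \<mu> x x0
    by (unfold_locales) (simp_all add: A1 A2 lin1 lin2 A_sa xdS xmin \<alpha>_pos \<alpha>_C1 \<mu>_pos lim1 lim2 lim3 int_inf sol)
  show ?thesis by (rule x_conv)
qed


end
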